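(* Let $A$ be a domain, let $F$ be a strong filtration on $A$ by $(\mathbb{Z}^M,<_1)$, and let $G$ be a strong filtration on $\mathrm{gr}_F(A)$ by $(\mathbb{Z}^L,<_2)$ which is compatible with the grading induced by $F$. Then there is a strong filtration $F\circ G$ on $A$ by $(\mathbb{Z}^{M+L},<_1\circ<_2)$, where $<_1\circ<_2$ is the lexicographic order that first compares by $<_1$ and breaks ties with $<_2$, and its associated graded algebra is $\mathrm{gr}_{F\circ G}(A)=\mathrm{gr}_G(\mathrm{gr}_F(A))$.
   Context: A filtration by a totally ordered group $(\mathbb{Z}^k,<)$ is an increasing family of subspaces $F_{\le w}$ with $F_{\le w}F_{\le u}\subset F_{\le w+u}$ and union the whole algebra; it is strong if its associated graded algebra $\bigoplus_w F_{\le w}/F_{<w}$ is a domain. Compatibility of $G$ with the grading means each graded piece $F_{\le w}/F_{<w}$ of $\mathrm{gr}_F(A)$ is itself filtered by the spaces of $G$. *)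

theory Defs
  imports "HOL-Algebra.Algebra" "HOL-Library.Function_Algebras"
begin

definition tot_ordered_group :: "('g::ab_group_add \<Rightarrow> 'g \<Rightarrow> bool) \<Rightarrow> bool" where
  "tot_ordered_group lt \<longleftrightarrow>
     (\<forall>x. \<not> lt x x) \<and> (\<forall>x y z. lt x y \<longrightarrow> lt y z \<longrightarrow> lt x z) \<and>
     (\<forall>x y. x \<noteq> y \<longrightarrow> lt x y \<or> lt y x) \<and> (\<forall>x y z. lt x y \<longrightarrow> lt (x + z) (y + z))"

text \<open>A filtration of the K-algebra A by the ordered group (g, lt):
  F w is the subspace F_{<= w}.\<close>
definition filtration ::
  "'k ring \<Rightarrow> ('k, 'b) module \<Rightarrow> ('g::ab_group_add \<Rightarrow> 'g \<Rightarrow> bool) \<Rightarrow> ('g \<Rightarrow> 'b set) \<Rightarrow> bool" where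
  "filtration K A lt F \<longleftrightarrow>
     (\<forall>w. submodule (F w) K A) \<and>
     (\<forall>w u. lt w u \<longrightarrow> F w \<subseteq> F u) \<and>
     (\<forall>w u. \<forall>x\<in>F w. \<forall>y\<in>F u. x \<otimes>\<^bsub>A\<^esub> y \<in> F (w + u)) \<and>
     (\<Union>w. F w) = carrier A"

definition flt :: "('g \<Rightarrow> 'g \<Rightarrow> bool) \<Rightarrow> ('g \<Rightarrow> 'b set) \<Rightarrow> 'g \<Rightarrow> 'b set" where
  "flt lt F w = \<Union>{F u | u. lt u w}"

definition crep :: "'b set \<Rightarrow> 'b" where
  "crep S = Eps (\<lambda>s. s \<in> S)"

text \<open>Elements of gr_F(A) are functions assigning to each degree
  w a coset of F_{<w} contained in F_{<=w}, almost all of them zero.\<close>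
definition hcls :: "('k, 'b) module \<Rightarrow> ('g \<Rightarrow> 'g \<Rightarrow> bool) \<Rightarrow> ('g \<Rightarrow> 'b set) \<Rightarrow> 'g \<Rightarrow> 'b \<Rightarrow> ('g \<Rightarrow> 'b set)" where
  "hcls A lt F w x = (\<lambda>w'. if w' = w then a_r_coset A (flt lt F w) x else flt lt F w')"

definition gr_carrier :: "('k, 'b) module \<Rightarrow> ('g \<Rightarrow> 'g \<Rightarrow> bool) \<Rightarrow> ('g \<Rightarrow> 'b set) \<Rightarrow> ('g \<Rightarrow> 'b set) set" where
  "gr_carrier A lt F =
     {f. (\<forall>w. \<exists>x\<in>F w. f w = a_r_coset A (flt lt F w) x) \<and> finite {w. f w \<noteq> flt lt F w}}"

definition gr :: "('k, 'b) module \<Rightarrow> ('g::ab_group_add \<Rightarrow> 'g \<Rightarrow> bool) \<Rightarrow> ('g \<Rightarrow> 'b set) \<Rightarrow> ('k, 'g \<Rightarrow> 'b set) module" where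
  "gr A lt F =
    \<lparr> carrier = gr_carrier A lt F,
      monoid.mult = (\<lambda>f g. \<lambda>w. a_r_coset A (flt lt F w)
          (finsum A (\<lambda>u. crep (f u) \<otimes>\<^bsub>A\<^esub> crep (g (w - u)))
             {u. f u \<noteq> flt lt F u \<and> g (w - u) \<noteq> flt lt F (w - u)})),
      monoid.one = hcls A lt F 0 \<one>\<^bsub>A\<^esub>,
      ring.zero = (\<lambda>w. flt lt F w),
      ring.add = (\<lambda>f g. \<lambda>w. a_r_coset A (flt lt F w) (crep (f w) \<oplus>\<^bsub>A\<^esub> crep (g w))),
      module.smult = (\<lambda>c f. \<lambda>w. a_r_coset A (flt lt F w) (c \<odot>\<^bsub>A\<^esub> crep (f w))) \<rparr>"

text \<open>A filtration G of gr_F(A) is compatible with the grading when every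
  G_{<=u} contains all homogeneous components of its elements, i.e. each
  graded piece F_{<=w}/F_{<w} is filtered by the G_{<=u} intersected with it.\<close>
definition grading_compatible ::
  "('g \<Rightarrow> 'g \<Rightarrow> bool) \<Rightarrow> ('g \<Rightarrow> 'b set) \<Rightarrow> ('h \<Rightarrow> ('g \<Rightarrow> 'b set) set) \<Rightarrow> bool" where
  "grading_compatible lt F G \<longleftrightarrow>
     (\<forall>u. \<forall>f\<in>G u. \<forall>w. (\<lambda>w'. if w' = w then f w else flt lt F w') \<in> G u)"

definition lexcomp ::
  "(('m \<Rightarrow> int) \<Rightarrow> ('m \<Rightarrow> int) \<Rightarrow> bool) \<Rightarrow> (('l \<Rightarrow> int) \<Rightarrow> ('l \<Rightarrow> int) \<Rightarrow> bool)
    \<Rightarrow> ('m + 'l \<Rightarrow> int) \<Rightarrow> ('m + 'l \<Rightarrow> int) \<Rightarrow> bool" where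
  "lexcomp lt1 lt2 x y \<longleftrightarrow>
     lt1 (x \<circ> Inl) (y \<circ> Inl) \<or> (x \<circ> Inl = y \<circ> Inl \<and> lt2 (x \<circ> Inr) (y \<circ> Inr))"

definition compF ::
  "('k, 'b) module \<Rightarrow> (('m \<Rightarrow> int) \<Rightarrow> ('m \<Rightarrow> int) \<Rightarrow> bool) \<Rightarrow> (('m \<Rightarrow> int) \<Rightarrow> 'b set)
    \<Rightarrow> (('l \<Rightarrow> int) \<Rightarrow> (('m \<Rightarrow> int) \<Rightarrow> 'b set) set) \<Rightarrow> ('m + 'l \<Rightarrow> int) \<Rightarrow> 'b set" where
  "compF A lt1 F G x =
     {a \<in> F (x \<circ> Inl). a \<in> flt lt1 F (x \<circ> Inl) \<or> hcls A lt1 F (x \<circ> Inl) a \<in> G (x \<circ> Inr)}"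

end

theory Submission
  imports Defs
begin

context abelian_group begin

lemma sg_carr: "additive_subgroup N G \<Longrightarrow> x \<in> N \<Longrightarrow> x \<in> carrier G"
  by (rule additive_subgroup.a_Hcarr)

lemma coset_eq_iff:
  assumes N: "additive_subgroup N G" and a: "a \<in> carrier G" and b: "b \<in> carrier G"
  shows "(N +> a = N +> b) \<longleftrightarrow> a \<ominus> b \<in> N"
proof -
  interpret abelian_subgroup N G by (rule abelian_subgroupI3[OF N abelian_group_axioms])
  show ?thesis
  proof
    assume "N +> a = N +> b"
    then have "a \<in> N +> b" using a_rcos_self[OF a] by simp
    then show "a \<ominus> b \<in> N" using a_rcos_module[OF b a] by (simp add: a_minus_def)
  next
    assume "a \<ominus> b \<in> N"
    then have "a \<in> N +> b" using a_rcos_module[OF b a] by (simp add: a_minus_def)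
    then show "N +> a = N +> b" using a_repr_independence'[OF _ b] by simp
  qed
qed

lemma crep_coset:
  assumes N: "additive_subgroup N G" and a: "a \<in> carrier G"
  shows "crep (N +> a) \<in> carrier G \<and> crep (N +> a) \<ominus> a \<in> N \<and> crep (N +> a) \<in> N +> a"
proof -
  interpret abelian_subgroup N G by (rule abelian_subgroupI3[OF N abelian_group_axioms])
  have "a \<in> N +> a" using a_rcos_self[OF a] .
  then have c: "crep (N +> a) \<in> N +> a" unfolding crep_def by (rule someI)
  then have "crep (N +> a) \<in> carrier G" using a_elemrcos_carrier[OF a] by simp
  with c show ?thesis using a_rcos_module[OF a] by (simp add: a_minus_def)
qed

lemma coset_self: "additive_subgroup N G \<Longrightarrow> a \<in> N \<Longrightarrow> N +> a = N"
  by (rule abelian_subgroup.a_rcos_const[OF abelian_subgroupI3[OF _ abelian_group_axioms]])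

lemma coset_zeroD:
  assumes N: "additive_subgroup N G" and a: "a \<in> carrier G" and e: "N +> a = N"
  shows "a \<in> N"
proof -
  interpret abelian_subgroup N G by (rule abelian_subgroupI3[OF N abelian_group_axioms])
  show ?thesis using a_rcos_self[OF a] e by simp
qed

end

context abelian_group begin

lemma cos_add:
  assumes N: "additive_subgroup N G" and c: "a \<in> carrier G" "a' \<in> carrier G" "b \<in> carrier G" "b' \<in> carrier G"
    and e1: "N +> a = N +> a'" and e2: "N +> b = N +> b'"
  shows "N +> (a \<oplus> b) = N +> (a' \<oplus> b')"
proof -
  have "a \<ominus> a' \<in> N" "b \<ominus> b' \<in> N" using coset_eq_iff[OF N] c e1 e2 by auto
  then have "(a \<ominus> a') \<oplus> (b \<ominus> b') \<in> N" by (rule additive_subgroup.a_closed[OF N])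
  moreover have "(a \<ominus> a') \<oplus> (b \<ominus> b') = (a \<oplus> b) \<ominus> (a' \<oplus> b')"
    using c by (simp add: a_minus_def minus_add a_ac)
  ultimately show ?thesis using coset_eq_iff[OF N] c by simp
qed

lemma cos_neg:
  assumes N: "additive_subgroup N G" and c: "a \<in> carrier G" "b \<in> carrier G"
    and e: "N +> a = N +> b"
  shows "N +> (\<ominus> a) = N +> (\<ominus> b)"
proof -
  have "a \<ominus> b \<in> N" using coset_eq_iff[OF N] c e by auto
  then have "\<ominus> (a \<ominus> b) \<in> N" by (rule additive_subgroup.a_inv_closed[OF N])
  moreover have "\<ominus> (a \<ominus> b) = (\<ominus> a) \<ominus> (\<ominus> b)"
    using c by (simp add: a_minus_def minus_add a_ac)
  ultimately show ?thesis using coset_eq_iff[OF N] c by simp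
qed

lemma cos_crep:
  assumes N: "additive_subgroup N G" and a: "a \<in> carrier G"
  shows "N +> crep (N +> a) = N +> a"
  using crep_coset[OF N a] coset_eq_iff[OF N] a by blast

lemma crep_carr:
  assumes N: "additive_subgroup N G" and a: "a \<in> carrier G"
  shows "crep (N +> a) \<in> carrier G"
  using crep_coset[OF N a] by blast

lemma cos_zero_eq: "additive_subgroup N G \<Longrightarrow> N +> \<zero> = N"
  by (rule coset_self) (auto intro: additive_subgroup.zero_closed)

lemma cos_mem_iff:
  assumes N: "additive_subgroup N G" and a: "a \<in> carrier G"
  shows "(N +> a = N) \<longleftrightarrow> a \<in> N"
  using coset_zeroD[OF N a] coset_self[OF N] by blast

lemma cos_zero_l:
  assumes N: "additive_subgroup N G" and z: "z \<in> N" and b: "b \<in> carrier G"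
  shows "N +> (z \<oplus> b) = N +> b"
proof -
  have zc: "z \<in> carrier G" using sg_carr[OF N z] .
  have "N +> z = N +> \<zero>" using coset_self[OF N z] cos_zero_eq[OF N] by simp
  then have "N +> (z \<oplus> b) = N +> (\<zero> \<oplus> b)"
    using cos_add[OF N zc zero_closed b b] by simp
  then show ?thesis using b by simp
qed

lemma cos_sum:
  assumes N: "additive_subgroup N G" and fin: "finite I"
    and f: "f \<in> I \<rightarrow> carrier G" and g: "g \<in> I \<rightarrow> carrier G"
    and e: "\<And>i. i \<in> I \<Longrightarrow> N +> f i = N +> g i"
  shows "N +> finsum G f I = N +> finsum G g I"
  using fin f g e
proof (induction I rule: finite_induct)
  case empty
  then show ?case by simp
next
  case (insert x I)
  have "finsum G f (insert x I) = f x \<oplus> finsum G f I"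
    using insert by (intro finsum_insert) auto
  moreover have "finsum G g (insert x I) = g x \<oplus> finsum G g I"
    using insert by (intro finsum_insert) auto
  moreover have "N +> (f x \<oplus> finsum G f I) = N +> (g x \<oplus> finsum G g I)"
    using insert by (intro cos_add[OF N]) (auto intro: finsum_closed)
  ultimately show ?case by simp
qed

lemma sg_finsum:
  assumes N: "additive_subgroup N G" and fin: "finite I" and f: "f \<in> I \<rightarrow> N"
  shows "finsum G f I \<in> N"
  using fin f
proof (induction I rule: finite_induct)
  case empty
  then show ?case using additive_subgroup.zero_closed[OF N] by simp
next
  case (insert x I)
  have fc: "f \<in> insert x I \<rightarrow> carrier G" using insert(4) sg_carr[OF N] by blast
  have "finsum G f (insert x I) = f x \<oplus> finsum G f I"
    using insert fc by (intro finsum_insert) auto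
  then show ?case using insert additive_subgroup.a_closed[OF N] by auto
qed

lemma cos_sum_ext:
  assumes N: "additive_subgroup N G" and fin: "finite J" and IJ: "I \<subseteq> J"
    and f: "f \<in> J \<rightarrow> carrier G" and z: "\<And>i. i \<in> J - I \<Longrightarrow> f i \<in> N"
  shows "N +> finsum G f J = N +> finsum G f I"
proof -
  define h where "h = (\<lambda>i. if i \<in> I then f i else \<zero>)"
  have "finsum G f I = finsum G h J"
    by (rule add.finprod_mono_neutral_cong_left[OF fin IJ]) (use f in \<open>auto simp: h_def\<close>)
  moreover have "N +> finsum G f J = N +> finsum G h J"
    using f z coset_self[OF N] cos_zero_eq[OF N]
    by (intro cos_sum[OF N fin]) (auto simp: h_def)
  ultimately show ?thesis by simp
qed

lemma cos_mono:
  assumes N: "additive_subgroup N G" and N': "additive_subgroup N' G" and sub: "N \<subseteq> N'"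
    and c: "a \<in> carrier G" "b \<in> carrier G" and e: "N +> a = N +> b"
  shows "N' +> a = N' +> b"
  using coset_eq_iff[OF N c] coset_eq_iff[OF N' c] e sub by blast

end

lemma tot_irrefl: "tot_ordered_group lt \<Longrightarrow> \<not> lt x x" unfolding tot_ordered_group_def by blast
lemma tot_trans: "tot_ordered_group lt \<Longrightarrow> lt x y \<Longrightarrow> lt y z \<Longrightarrow> lt x z" unfolding tot_ordered_group_def by blast
lemma tot_total: "tot_ordered_group lt \<Longrightarrow> x \<noteq> y \<Longrightarrow> lt x y \<or> lt y x" unfolding tot_ordered_group_def by blast
lemma tot_addr: "tot_ordered_group lt \<Longrightarrow> lt x y \<Longrightarrow> lt (x + z) (y + z)" unfolding tot_ordered_group_def by blast
lemma tot_addl: "tot_ordered_group lt \<Longrightarrow> lt x y \<Longrightarrow> lt (z + x) (z + y)"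
  using tot_addr[of lt x y z] by (simp add: add.commute)
lemma tot_add2: "tot_ordered_group lt \<Longrightarrow> lt x y \<Longrightarrow> lt z t \<Longrightarrow> lt (x + z) (y + t)"
  by (meson tot_addl tot_addr tot_trans)
lemma tot_below:
  fixes lt :: "'g::ab_group_add \<Rightarrow> 'g \<Rightarrow> bool"
  assumes t: "tot_ordered_group lt" and d: "(d::'g) \<noteq> 0"
  shows "\<exists>u. lt u w"
proof -
  have "lt d 0 \<or> lt 0 d" using tot_total[OF t d] .
  then have "\<exists>e. lt e 0"
  proof
    assume "lt 0 d"
    then have "lt (0 + - d) (d + - d)" by (rule tot_addr[OF t])
    then show ?thesis by auto
  qed auto
  then obtain e where "lt e 0" by blast
  then have "lt (e + w) (0 + w)" by (rule tot_addr[OF t])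
  then show ?thesis by auto
qed

locale filt = cring A for A :: "('k, 'b) module" (structure) +
  fixes K :: "'k ring" and lt :: "'g::ab_group_add \<Rightarrow> 'g \<Rightarrow> bool" and F :: "'g \<Rightarrow> 'b set"
  assumes tot: "tot_ordered_group lt" and filt: "filtration K A lt F"
    and nontriv: "\<exists>d::'g. d \<noteq> 0"
begin

lemma F_submod: "submodule (F w) K A" using filt unfolding filtration_def by blast
lemma F_sg: "additive_subgroup (F w) A"
  using F_submod[of w] unfolding submodule_def additive_subgroup_def by blast
lemma F_carr: "x \<in> F w \<Longrightarrow> x \<in> carrier A" using sg_carr[OF F_sg] .
lemma F_mono: "lt v w \<Longrightarrow> F v \<subseteq> F w" using filt unfolding filtration_def by blast
lemma F_mult: "a \<in> F w \<Longrightarrow> b \<in> F u \<Longrightarrow> a \<otimes> b \<in> F (w + u)" using filt unfolding filtration_def by blast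
lemma F_union: "a \<in> carrier A \<Longrightarrow> \<exists>w. a \<in> F w" using filt unfolding filtration_def by blast
lemma F_smult: "c \<in> carrier K \<Longrightarrow> a \<in> F w \<Longrightarrow> c \<odot>\<^bsub>A\<^esub> a \<in> F w"
  using submodule.smult_closed[OF F_submod] by blast

lemma below: "\<exists>u. lt u w" using tot_below[OF tot] nontriv by blast

lemma flt_iff: "a \<in> flt lt F w \<longleftrightarrow> (\<exists>v. lt v w \<and> a \<in> F v)"
  unfolding flt_def by blast

lemma F_flt: "lt v w \<Longrightarrow> F v \<subseteq> flt lt F w" by (auto simp: flt_iff)
lemma flt_F: "flt lt F w \<subseteq> F w"
proof
  fix x assume "x \<in> flt lt F w"
  then obtain v where "lt v w" "x \<in> F v" by (auto simp: flt_iff)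
  then show "x \<in> F w" using F_mono by blast
qed
lemma flt_mono: "lt v w \<Longrightarrow> flt lt F v \<subseteq> flt lt F w"
proof
  fix x assume "lt v w" "x \<in> flt lt F v"
  then obtain v' where "lt v' v" "x \<in> F v'" "lt v w" by (auto simp: flt_iff)
  then show "x \<in> flt lt F w" using tot_trans[OF tot] by (auto simp: flt_iff)
qed

lemma two_in_one:
  assumes "a \<in> F v1" "b \<in> F v2"
  shows "\<exists>v. (v = v1 \<or> v = v2) \<and> a \<in> F v \<and> b \<in> F v"
proof (cases "v1 = v2")
  case True then show ?thesis using assms by blast
next
  case False
  then have "lt v1 v2 \<or> lt v2 v1" using tot_total[OF tot] by blast
  then show ?thesis using assms F_mono by blast
qed

lemma flt_sg: "additive_subgroup (flt lt F w) A"
proof -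
  obtain u where u: "lt u w" using below by blast
  show ?thesis
  proof (rule additive_subgroupI, rule subgroup.intro)
    show "flt lt F w \<subseteq> carrier (add_monoid A)" using flt_F F_carr by auto
    show "\<one>\<^bsub>add_monoid A\<^esub> \<in> flt lt F w"
      using u additive_subgroup.zero_closed[OF F_sg[of u]] unfolding flt_iff by auto
    fix x y assume x: "x \<in> flt lt F w" and y: "y \<in> flt lt F w"
    then obtain v1 v2 where v: "lt v1 w" "x \<in> F v1" "lt v2 w" "y \<in> F v2" unfolding flt_iff by blast
    then obtain v where "lt v w" "x \<in> F v" "y \<in> F v" using two_in_one[of x v1 y v2] by blast
    then show "x \<otimes>\<^bsub>add_monoid A\<^esub> y \<in> flt lt F w"
      using additive_subgroup.a_closed[OF F_sg] unfolding flt_iff by auto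
  next
    fix x assume x: "x \<in> flt lt F w"
    then obtain v where "lt v w" "x \<in> F v" unfolding flt_iff by blast
    then show "inv\<^bsub>add_monoid A\<^esub> x \<in> flt lt F w"
      using additive_subgroup.a_inv_closed[OF F_sg] unfolding flt_iff a_inv_def[symmetric] by blast
  qed
qed

lemma flt_carr: "x \<in> flt lt F w \<Longrightarrow> x \<in> carrier A" using flt_F F_carr by blast

lemma flt_multl: "a \<in> flt lt F w \<Longrightarrow> b \<in> F u \<Longrightarrow> a \<otimes> b \<in> flt lt F (w + u)"
  unfolding flt_iff using F_mult tot_addr[OF tot] by blast
lemma flt_multr: "a \<in> F w \<Longrightarrow> b \<in> flt lt F u \<Longrightarrow> a \<otimes> b \<in> flt lt F (w + u)"
  unfolding flt_iff using F_mult tot_addl[OF tot] by blast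
lemma flt_smult: "c \<in> carrier K \<Longrightarrow> a \<in> flt lt F w \<Longrightarrow> c \<odot>\<^bsub>A\<^esub> a \<in> flt lt F w"
  unfolding flt_iff using F_smult by blast

abbreviation "Gr \<equiv> gr A lt F"

lemma gr_simps:
  "carrier Gr = gr_carrier A lt F"
  "\<zero>\<^bsub>Gr\<^esub> = (\<lambda>w. flt lt F w)"
  "\<one>\<^bsub>Gr\<^esub> = hcls A lt F 0 \<one>"
  "f \<oplus>\<^bsub>Gr\<^esub> g = (\<lambda>w. flt lt F w +> (crep (f w) \<oplus> crep (g w)))"
  "c \<odot>\<^bsub>Gr\<^esub> f = (\<lambda>w. flt lt F w +> (c \<odot>\<^bsub>A\<^esub> crep (f w)))"
  "f \<otimes>\<^bsub>Gr\<^esub> g = (\<lambda>w. flt lt F w +> (finsum A (\<lambda>u. crep (f u) \<otimes> crep (g (w - u)))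
             {u. f u \<noteq> flt lt F u \<and> g (w - u) \<noteq> flt lt F (w - u)}))"
  by (simp_all add: gr_def)

lemma grE:
  assumes f: "f \<in> carrier Gr"
  shows "crep (f w) \<in> F w" "f w = flt lt F w +> crep (f w)" "crep (f w) \<in> carrier A"
    "finite {w. f w \<noteq> flt lt F w}"
proof -
  obtain x where x: "x \<in> F w" "f w = flt lt F w +> x"
    using f unfolding gr_simps gr_carrier_def by blast
  have xc: "x \<in> carrier A" using F_carr x(1) .
  have c: "crep (f w) \<in> carrier A" "crep (f w) \<ominus> x \<in> flt lt F w" using crep_coset[OF flt_sg xc] x by auto
  then have "crep (f w) = (crep (f w) \<ominus> x) \<oplus> x" using xc by (simp add: a_minus_def a_assoc l_neg)
  moreover have "crep (f w) \<ominus> x \<in> F w" using c flt_F by blast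
  ultimately show "crep (f w) \<in> F w" using additive_subgroup.a_closed[OF F_sg] x by metis
  show "f w = flt lt F w +> crep (f w)" using x cos_crep[OF flt_sg xc] by simp
  show "crep (f w) \<in> carrier A" using c by simp
  show "finite {w. f w \<noteq> flt lt F w}" using f unfolding gr_simps gr_carrier_def by blast
qed

lemma gr_zero_iff:
  assumes f: "f \<in> carrier Gr"
  shows "f w = flt lt F w \<longleftrightarrow> crep (f w) \<in> flt lt F w"
  using grE(2,3)[OF f, of w] cos_mem_iff[OF flt_sg] by metis

lemma crep_cos:
  assumes a: "a \<in> carrier A"
  shows "flt lt F w +> crep (flt lt F w +> a) = flt lt F w +> a"
  by (rule cos_crep[OF flt_sg a])

lemma hcls_at: "hcls A lt F w a w = flt lt F w +> a" "w' \<noteq> w \<Longrightarrow> hcls A lt F w a w' = flt lt F w'"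
  unfolding hcls_def by auto

lemma crep_flt: "crep (flt lt F w) \<in> flt lt F w"
  unfolding crep_def by (rule someI[of _ \<zero>]) (rule additive_subgroup.zero_closed[OF flt_sg])

lemma finsum_single: "g w \<in> carrier A \<Longrightarrow> finsum A g {w} = g w"
  using finsum_insert[of "{}" w g] by simp

lemma hcls_carr:
  assumes a: "a \<in> F w"
  shows "hcls A lt F w a \<in> carrier Gr"
proof -
  have "\<forall>w'. \<exists>x\<in>F w'. hcls A lt F w a w' = flt lt F w' +> x"
  proof
    fix w' show "\<exists>x\<in>F w'. hcls A lt F w a w' = flt lt F w' +> x"
    proof (cases "w' = w")
      case True then show ?thesis using a hcls_at by auto
    next
      case False then show ?thesis using hcls_at(2)[OF False] cos_zero_eq[OF flt_sg]
          additive_subgroup.zero_closed[OF F_sg] by metis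
    qed
  qed
  moreover have "{w'. hcls A lt F w a w' \<noteq> flt lt F w'} \<subseteq> {w}" using hcls_at(2) by auto
  ultimately show ?thesis unfolding gr_simps gr_carrier_def by (auto intro: finite_subset)
qed

lemma hcls_nz:
  assumes a: "a \<in> F w"
  shows "hcls A lt F w a w' \<noteq> flt lt F w' \<longleftrightarrow> (w' = w \<and> a \<notin> flt lt F w)"
  using hcls_at[where w=w and a=a] cos_mem_iff[OF flt_sg F_carr[OF a]] by (cases "w' = w") auto

lemma hcls_zero:
  assumes a: "a \<in> flt lt F w"
  shows "hcls A lt F w a = \<zero>\<^bsub>Gr\<^esub>"
  using hcls_nz[where a=a and w=w] a flt_F unfolding gr_simps by fastforce

lemma hcls_mem_F:
  assumes a: "a \<in> carrier A" and h: "hcls A lt F w a \<in> carrier Gr"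
  shows "a \<in> F w"
proof -
  have "crep (hcls A lt F w a w) \<in> F w" "hcls A lt F w a w = flt lt F w +> crep (hcls A lt F w a w)"
    using grE[OF h] by auto
  then obtain x where x: "x \<in> F w" "flt lt F w +> a = flt lt F w +> x" using hcls_at by auto
  then have "a \<ominus> x \<in> flt lt F w" using coset_eq_iff[OF flt_sg a F_carr] by blast
  then have "a \<ominus> x \<in> F w" using flt_F by blast
  then have "(a \<ominus> x) \<oplus> x \<in> F w" using x(1) additive_subgroup.a_closed[OF F_sg] by blast
  moreover have "(a \<ominus> x) \<oplus> x = a" using a F_carr[OF x(1)] by (simp add: a_minus_def a_assoc l_neg)
  ultimately show ?thesis by simp
qed

lemma crep_hcls:
  assumes a: "a \<in> F w"
  shows "flt lt F w' +> crep (hcls A lt F w a w') = flt lt F w' +> (if w' = w then a else \<zero>)"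
proof (cases "w' = w")
  case True then show ?thesis using hcls_at crep_cos F_carr[OF a] by simp
next
  case False
  then show ?thesis using hcls_at(2)[OF False] crep_cos[of \<zero> w'] cos_zero_eq[OF flt_sg] by simp
qed

lemma comp_add:
  assumes f: "f \<in> carrier Gr" and g: "g \<in> carrier Gr"
  shows "flt lt F w +> crep ((f \<oplus>\<^bsub>Gr\<^esub> g) w) = flt lt F w +> (crep (f w) \<oplus> crep (g w))"
  unfolding gr_simps using crep_cos grE(3)[OF f] grE(3)[OF g] by simp

lemma gr_add_cos:
  assumes f: "f \<in> carrier Gr" and g: "g \<in> carrier Gr"
  shows "(f \<oplus>\<^bsub>Gr\<^esub> g) w = flt lt F w +> (crep (f w) \<oplus> crep (g w))"
  unfolding gr_simps by simp

lemma hcls_add: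
  assumes a: "a \<in> F w" and b: "b \<in> F w"
  shows "hcls A lt F w (a \<oplus> b) = hcls A lt F w a \<oplus>\<^bsub>Gr\<^esub> hcls A lt F w b"
proof
  fix w'
  have ac: "a \<in> carrier A" "b \<in> carrier A" using a b F_carr by auto
  show "hcls A lt F w (a \<oplus> b) w' = (hcls A lt F w a \<oplus>\<^bsub>Gr\<^esub> hcls A lt F w b) w'"
  proof (cases "w' = w")
    case True
    have "flt lt F w +> (crep (hcls A lt F w a w) \<oplus> crep (hcls A lt F w b w)) = flt lt F w +> (a \<oplus> b)"
      using crep_hcls[OF a, of w] crep_hcls[OF b, of w] ac
      by (intro cos_add[OF flt_sg]) (auto intro: crep_carr[OF flt_sg] simp: hcls_at)
    then show ?thesis using True unfolding gr_simps by (simp add: hcls_at)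
  next
    case False
    have "flt lt F w' +> (crep (hcls A lt F w a w') \<oplus> crep (hcls A lt F w b w')) = flt lt F w' +> (\<zero> \<oplus> \<zero>)"
      using crep_hcls[OF a, of w'] crep_hcls[OF b, of w'] ac False flt_carr[OF crep_flt[of w']]
      by (intro cos_add[OF flt_sg]) (simp_all add: hcls_at)
    then show ?thesis using False cos_zero_eq[OF flt_sg] unfolding gr_simps by (simp add: hcls_at)
  qed
qed

lemma hcls_mult:
  assumes a: "a \<in> F w" and b: "b \<in> F v"
  shows "hcls A lt F w a \<otimes>\<^bsub>Gr\<^esub> hcls A lt F v b = hcls A lt F (w + v) (a \<otimes> b)"
proof
  fix x
  have ac: "a \<in> carrier A" "b \<in> carrier A" using a b F_carr by auto
  have abF: "a \<otimes> b \<in> F (w + v)" using F_mult a b .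
  define S where "S = {u. hcls A lt F w a u \<noteq> flt lt F u \<and> hcls A lt F v b (x - u) \<noteq> flt lt F (x - u)}"
  have S: "S = (if x = w + v \<and> a \<notin> flt lt F w \<and> b \<notin> flt lt F v then {w} else {})"
    unfolding S_def hcls_nz[OF a] hcls_nz[OF b] by (auto simp: algebra_simps)
  have lhs: "(hcls A lt F w a \<otimes>\<^bsub>Gr\<^esub> hcls A lt F v b) x =
     flt lt F x +> finsum A (\<lambda>u. crep (hcls A lt F w a u) \<otimes> crep (hcls A lt F v b (x - u))) S"
    unfolding gr_simps S_def by simp
  show "(hcls A lt F w a \<otimes>\<^bsub>Gr\<^esub> hcls A lt F v b) x = hcls A lt F (w + v) (a \<otimes> b) x"
  proof (cases "x = w + v \<and> a \<notin> flt lt F w \<and> b \<notin> flt lt F v")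
    case True
    then have xv: "x - w = v" by simp
    have c1: "crep (hcls A lt F w a w) \<in> carrier A" "crep (hcls A lt F v b v) \<in> carrier A"
      using crep_carr[OF flt_sg] ac by (auto simp: hcls_at)
    have e1: "crep (hcls A lt F w a w) \<ominus> a \<in> flt lt F w" "crep (hcls A lt F v b v) \<ominus> b \<in> flt lt F v"
      using crep_coset[OF flt_sg] ac by (auto simp: hcls_at)
    define p where "p = crep (hcls A lt F w a w)"
    define q where "q = crep (hcls A lt F v b v)"
    have "p \<otimes> q \<ominus> a \<otimes> b = (p \<ominus> a) \<otimes> q \<oplus> a \<otimes> (q \<ominus> b)"
      using c1 ac unfolding p_def[symmetric] q_def[symmetric]
      by (simp add: a_minus_def l_distr r_distr l_minus r_minus a_assoc)
         (simp add: a_assoc[symmetric] r_neg l_neg)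
    moreover have "(p \<ominus> a) \<otimes> q \<in> flt lt F (w + v)"
      using flt_multl e1 grE(1)[OF hcls_carr[OF b], of v] unfolding p_def q_def by blast
    moreover have "a \<otimes> (q \<ominus> b) \<in> flt lt F (w + v)"
      using flt_multr[OF a] e1 unfolding q_def by blast
    ultimately have "p \<otimes> q \<ominus> a \<otimes> b \<in> flt lt F (w + v)"
      using additive_subgroup.a_closed[OF flt_sg] by metis
    then have "flt lt F x +> (p \<otimes> q) = flt lt F x +> (a \<otimes> b)"
      using coset_eq_iff[OF flt_sg] c1 ac True unfolding p_def q_def by auto
    moreover have "finsum A (\<lambda>u. crep (hcls A lt F w a u) \<otimes> crep (hcls A lt F v b (x - u))) S = p \<otimes> q"
      using S True xv c1 finsum_single[where g="\<lambda>u. crep (hcls A lt F w a u) \<otimes> crep (hcls A lt F v b (x - u))" and w=w]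
      unfolding p_def q_def by simp
    ultimately show ?thesis using lhs True by (simp add: hcls_at)
  next
    case False
    then have "S = {}" using S by simp
    then have "(hcls A lt F w a \<otimes>\<^bsub>Gr\<^esub> hcls A lt F v b) x = flt lt F x"
      using lhs cos_zero_eq[OF flt_sg] by simp
    moreover have "hcls A lt F (w + v) (a \<otimes> b) x = flt lt F x"
    proof (cases "x = w + v")
      case True
      then have "a \<in> flt lt F w \<or> b \<in> flt lt F v" using False by simp
      then have "a \<otimes> b \<in> flt lt F (w + v)" using flt_multl flt_multr a b by blast
      then show ?thesis using True hcls_at coset_self[OF flt_sg] by simp
    next
      case False then show ?thesis using hcls_at by simp
    qed
    ultimately show ?thesis by simp
  qed
qed

lemma hcls_smult:
  assumes a: "a \<in> F w" and c: "c \<in> carrier K" and smc: "\<And>x. x \<in> carrier A \<Longrightarrow> c \<odot>\<^bsub>A\<^esub> x \<in> carrier A"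
    and smdist: "\<And>x y. x \<in> carrier A \<Longrightarrow> y \<in> carrier A \<Longrightarrow> c \<odot>\<^bsub>A\<^esub> (x \<ominus> y) = c \<odot>\<^bsub>A\<^esub> x \<ominus> c \<odot>\<^bsub>A\<^esub> y"
  shows "hcls A lt F w (c \<odot>\<^bsub>A\<^esub> a) = c \<odot>\<^bsub>Gr\<^esub> hcls A lt F w a"
proof
  fix w'
  have ac: "a \<in> carrier A" using a F_carr by auto
  have key: "flt lt F w' +> (c \<odot>\<^bsub>A\<^esub> crep (hcls A lt F w a w')) = flt lt F w' +> (c \<odot>\<^bsub>A\<^esub> (if w' = w then a else \<zero>))"
  proof -
    have cc: "crep (hcls A lt F w a w') \<in> carrier A"
      using grE(3)[OF hcls_carr[OF a]] .
    have "crep (hcls A lt F w a w') \<ominus> (if w' = w then a else \<zero>) \<in> flt lt F w'"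
      using crep_hcls[OF a, of w'] coset_eq_iff[OF flt_sg cc] ac by auto
    then have "c \<odot>\<^bsub>A\<^esub> (crep (hcls A lt F w a w') \<ominus> (if w' = w then a else \<zero>)) \<in> flt lt F w'"
      using flt_smult[OF c] by blast
    then show ?thesis using smdist[OF cc] coset_eq_iff[OF flt_sg] smc cc ac by auto
  qed
  show "hcls A lt F w (c \<odot>\<^bsub>A\<^esub> a) w' = (c \<odot>\<^bsub>Gr\<^esub> hcls A lt F w a) w'"
  proof (cases "w' = w")
    case True then show ?thesis using key unfolding gr_simps by (simp add: hcls_at)
  next
    case False
    have "c \<odot>\<^bsub>A\<^esub> \<zero> = c \<odot>\<^bsub>A\<^esub> (\<zero> \<ominus> \<zero>)" by (simp add: a_minus_def)
    also have "\<dots> = \<zero>" using smdist[of \<zero> \<zero>] smc[of \<zero>] by (simp add: a_minus_def r_neg)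
    finally have "c \<odot>\<^bsub>A\<^esub> \<zero> = \<zero>" .
    then show ?thesis using False key cos_zero_eq[OF flt_sg] unfolding gr_simps by (simp add: hcls_at)
  qed
qed

end

context filt begin

lemma gr_smult_carr:
  assumes c: "c \<in> carrier K" and f: "f \<in> carrier Gr"
  shows "c \<odot>\<^bsub>Gr\<^esub> f \<in> carrier Gr"
proof -
  have "\<forall>w. \<exists>x\<in>F w. (c \<odot>\<^bsub>Gr\<^esub> f) w = flt lt F w +> x"
    using F_smult[OF c grE(1)[OF f]] unfolding gr_simps by blast
  moreover have sub: "{w. (c \<odot>\<^bsub>Gr\<^esub> f) w \<noteq> flt lt F w} \<subseteq> {w. f w \<noteq> flt lt F w}"
  proof
    fix w assume w: "w \<in> {w. (c \<odot>\<^bsub>Gr\<^esub> f) w \<noteq> flt lt F w}"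
    show "w \<in> {w. f w \<noteq> flt lt F w}"
    proof (rule ccontr)
      assume "w \<notin> {w. f w \<noteq> flt lt F w}"
      then have "crep (f w) \<in> flt lt F w" using gr_zero_iff[OF f] by simp
      then have "c \<odot>\<^bsub>A\<^esub> crep (f w) \<in> flt lt F w" using flt_smult[OF c] by blast
      then have "(c \<odot>\<^bsub>Gr\<^esub> f) w = flt lt F w" unfolding gr_simps using coset_self[OF flt_sg] by simp
      then show False using w by simp
    qed
  qed
  moreover have "finite {w. (c \<odot>\<^bsub>Gr\<^esub> f) w \<noteq> flt lt F w}"
    using finite_subset[OF sub grE(4)[OF f]] .
  ultimately show ?thesis unfolding gr_simps(1) gr_carrier_def mem_Collect_eq by blast
qed

end

locale filt_ring = filt +
  assumes grc: "cring (gr A lt F)"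

sublocale filt_ring \<subseteq> GR: cring "gr A lt F" by (rule grc)

context filt_ring begin

lemma comp_finsum:
  assumes fin: "finite I" and h: "h \<in> I \<rightarrow> carrier Gr"
  shows "flt lt F w +> crep ((finsum Gr h I) w) = flt lt F w +> finsum A (\<lambda>i. crep (h i w)) I"
  using fin h
proof (induction I rule: finite_induct)
  case empty
  have "crep (flt lt F w) \<in> flt lt F w" by (rule crep_flt)
  then show ?case using coset_self[OF flt_sg] cos_zero_eq[OF flt_sg] by (simp add: gr_simps)
next
  case (insert x I)
  have hx: "h x \<in> carrier Gr" and hI: "h \<in> I \<rightarrow> carrier Gr" using insert by auto
  have sc: "finsum Gr h I \<in> carrier Gr" using GR.finsum_closed[OF hI] .
  have "finsum Gr h (insert x I) = h x \<oplus>\<^bsub>Gr\<^esub> finsum Gr h I"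
    using insert hx hI by (intro GR.finsum_insert) auto
  then have "flt lt F w +> crep ((finsum Gr h (insert x I)) w) = flt lt F w +> (crep (h x w) \<oplus> crep (finsum Gr h I w))"
    using comp_add[OF hx sc] by simp
  also have "\<dots> = flt lt F w +> (crep (h x w) \<oplus> finsum A (\<lambda>i. crep (h i w)) I)"
  proof -
    have pc: "(\<lambda>i. crep (h i w)) \<in> I \<rightarrow> carrier A" using hI grE(3) by auto
    show ?thesis
      using insert.IH[OF hI] grE(3)[OF hx] grE(3)[OF sc] finsum_closed[OF pc]
      by (intro cos_add[OF flt_sg]) auto
  qed
  also have "crep (h x w) \<oplus> finsum A (\<lambda>i. crep (h i w)) I = finsum A (\<lambda>i. crep (h i w)) (insert x I)"
    using insert grE(3) hx hI by (intro finsum_insert[symmetric]) auto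
  finally show ?case .
qed

lemma decomp:
  assumes f: "f \<in> carrier Gr"
  shows "f = finsum Gr (\<lambda>w. hcls A lt F w (crep (f w))) {w. f w \<noteq> flt lt F w}"
proof -
  define W where "W = {w. f w \<noteq> flt lt F w}"
  have fin: "finite W" using grE(4)[OF f] unfolding W_def .
  have hc: "(\<lambda>w. hcls A lt F w (crep (f w))) \<in> W \<rightarrow> carrier Gr"
    using hcls_carr grE(1)[OF f] by blast
  define g where "g = finsum Gr (\<lambda>w. hcls A lt F w (crep (f w))) W"
  have gc: "g \<in> carrier Gr" unfolding g_def using GR.finsum_closed[OF hc] .
  have "f w' = g w'" for w'
  proof -
    have "g w' = flt lt F w' +> crep (g w')" using grE(2)[OF gc] .
    also have "\<dots> = flt lt F w' +> finsum A (\<lambda>w. crep (hcls A lt F w (crep (f w)) w')) W"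
      unfolding g_def using comp_finsum[OF fin hc] .
    also have "\<dots> = flt lt F w' +> finsum A (\<lambda>w. if w' = w then crep (f w) else \<zero>) W"
    proof (rule cos_sum[OF flt_sg fin])
      show "(\<lambda>w. crep (hcls A lt F w (crep (f w)) w')) \<in> W \<rightarrow> carrier A"
        using grE(3)[OF hcls_carr[OF grE(1)[OF f]]] by blast
      show "(\<lambda>w. if w' = w then crep (f w) else \<zero>) \<in> W \<rightarrow> carrier A"
        using grE(3)[OF f] by simp
      fix w assume "w \<in> W"
      show "flt lt F w' +> crep (hcls A lt F w (crep (f w)) w') = flt lt F w' +> (if w' = w then crep (f w) else \<zero>)"
        by (rule crep_hcls[OF grE(1)[OF f]])
    qed
    also have "\<dots> = flt lt F w' +> (if w' \<in> W then crep (f w') else \<zero>)"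
    proof (cases "w' \<in> W")
      case True
      have "(\<lambda>w. crep (f w)) \<in> W \<rightarrow> carrier A" using grE(3)[OF f] by simp
      from add.finprod_singleton[OF True fin this]
      show ?thesis using True by simp
    next
      case False
      then have "finsum A (\<lambda>w. if w' = w then crep (f w) else \<zero>) W = finsum A (\<lambda>w. \<zero>) W"
        by (intro finsum_cong') (use False in auto)
      then show ?thesis using False by simp
    qed
    also have "\<dots> = f w'"
      using grE(2)[OF f, of w'] cos_zero_eq[OF flt_sg] unfolding W_def by auto
    finally show ?thesis by simp
  qed
  then have "f = g" by (rule ext)
  then show ?thesis unfolding g_def W_def .
qed


lemma comp_minus:
  assumes f: "f \<in> carrier Gr" and g: "g \<in> carrier Gr"
  shows "flt lt F w +> crep ((f \<ominus>\<^bsub>Gr\<^esub> g) w) = flt lt F w +> (crep (f w) \<ominus> crep (g w))"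
proof -
  define d where "d = f \<ominus>\<^bsub>Gr\<^esub> g"
  have dc: "d \<in> carrier Gr" unfolding d_def using f g by (rule GR.minus_closed)
  have "d \<oplus>\<^bsub>Gr\<^esub> g = (f \<oplus>\<^bsub>Gr\<^esub> \<ominus>\<^bsub>Gr\<^esub> g) \<oplus>\<^bsub>Gr\<^esub> g"
    unfolding d_def using f g by (simp only: GR.minus_eq)
  also have "\<dots> = f \<oplus>\<^bsub>Gr\<^esub> (\<ominus>\<^bsub>Gr\<^esub> g \<oplus>\<^bsub>Gr\<^esub> g)"
    using f g by (intro GR.a_assoc) auto
  also have "\<dots> = f" using f g by (simp only: GR.l_neg GR.r_zero)
  finally have fd: "f = d \<oplus>\<^bsub>Gr\<^esub> g" by simp
  have cs: "crep (f w) \<in> carrier A" "crep (g w) \<in> carrier A" "crep (d w) \<in> carrier A"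
    using grE(3) f g dc by auto
  have e1: "flt lt F w +> crep (f w) = flt lt F w +> (crep (d w) \<oplus> crep (g w))"
  proof -
    have "flt lt F w +> crep ((d \<oplus>\<^bsub>Gr\<^esub> g) w) = flt lt F w +> (crep (d w) \<oplus> crep (g w))"
      by (rule comp_add[OF dc g])
    then show ?thesis using fd by simp
  qed
  have "flt lt F w +> (crep (f w) \<oplus> \<ominus> crep (g w)) = flt lt F w +> ((crep (d w) \<oplus> crep (g w)) \<oplus> \<ominus> crep (g w))"
    using cs e1 by (intro cos_add[OF flt_sg]) auto
  also have "(crep (d w) \<oplus> crep (g w)) \<oplus> \<ominus> crep (g w) = crep (d w)"
    using cs by (simp add: a_assoc r_neg)
  finally show ?thesis using cs by (simp add: a_minus_def d_def)
qed

lemma hcls_neg: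
  assumes a: "a \<in> F w"
  shows "hcls A lt F w (\<ominus> a) = \<ominus>\<^bsub>Gr\<^esub> hcls A lt F w a"
proof -
  have ac: "a \<in> carrier A" using F_carr a .
  have na: "\<ominus> a \<in> F w" using additive_subgroup.a_inv_closed[OF F_sg a] .
  have h1: "hcls A lt F w a \<in> carrier Gr" "hcls A lt F w (\<ominus> a) \<in> carrier Gr"
    using hcls_carr a na by auto
  have "hcls A lt F w (\<ominus> a) \<oplus>\<^bsub>Gr\<^esub> hcls A lt F w a = hcls A lt F w (\<ominus> a \<oplus> a)"
    using hcls_add[OF na a] by simp
  also have "\<ominus> a \<oplus> a = \<zero>" using ac by (rule l_neg)
  also have "hcls A lt F w \<zero> = \<zero>\<^bsub>Gr\<^esub>"
    by (rule hcls_zero) (rule additive_subgroup.zero_closed[OF flt_sg])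
  finally have "hcls A lt F w (\<ominus> a) \<oplus>\<^bsub>Gr\<^esub> hcls A lt F w a = \<zero>\<^bsub>Gr\<^esub>" .
  from GR.minus_equality[OF this h1(1) h1(2)] show ?thesis by simp
qed

end

definition join :: "('m \<Rightarrow> int) \<Rightarrow> ('l \<Rightarrow> int) \<Rightarrow> ('m + 'l \<Rightarrow> int)" where
  "join w u = case_sum w u"

lemma join_Inl [simp]: "join w u \<circ> Inl = w" by (simp add: join_def comp_def)
lemma join_Inr [simp]: "join w u \<circ> Inr = u" by (simp add: join_def comp_def)
lemma join_split: "join (x \<circ> Inl) (x \<circ> Inr) = x"
  by (rule ext) (simp add: join_def split: sum.split)
lemma join_inj: "join w u = join w' u' \<longleftrightarrow> w = w' \<and> u = u'"
proof
  assume e: "join w u = join w' u'"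
  then have "join w u \<circ> Inl = join w' u' \<circ> Inl" "join w u \<circ> Inr = join w' u' \<circ> Inr" by simp_all
  then show "w = w' \<and> u = u'" by simp
qed simp
lemma comp_plus [simp]: "((x::'a \<Rightarrow> int) + y) \<circ> f = (x \<circ> f) + (y \<circ> f)" by (rule ext) simp
lemma comp_minus [simp]: "((x::'a \<Rightarrow> int) - y) \<circ> f = (x \<circ> f) - (y \<circ> f)" by (rule ext) simp
lemma comp_zero [simp]: "(0::'a \<Rightarrow> int) \<circ> f = 0" by (rule ext) simp
lemma join_eq_iff: "x = join w u \<longleftrightarrow> x \<circ> Inl = w \<and> x \<circ> Inr = u"
  using join_split[of x] by auto

lemma lex_tot:
  fixes lt1 :: "('m \<Rightarrow> int) \<Rightarrow> ('m \<Rightarrow> int) \<Rightarrow> bool" and lt2 :: "('l \<Rightarrow> int) \<Rightarrow> ('l \<Rightarrow> int) \<Rightarrow> bool"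
  assumes t1: "tot_ordered_group lt1" and t2: "tot_ordered_group lt2"
  shows "tot_ordered_group (lexcomp lt1 lt2)"
  unfolding tot_ordered_group_def lexcomp_def
proof (intro conjI allI impI)
  fix x :: "'m + 'l \<Rightarrow> int"
  show "\<not> (lt1 (x \<circ> Inl) (x \<circ> Inl) \<or> x \<circ> Inl = x \<circ> Inl \<and> lt2 (x \<circ> Inr) (x \<circ> Inr))"
    using tot_irrefl[OF t1] tot_irrefl[OF t2] by blast
next
  fix x y z :: "'m + 'l \<Rightarrow> int"
  assume "lt1 (x \<circ> Inl) (y \<circ> Inl) \<or> x \<circ> Inl = y \<circ> Inl \<and> lt2 (x \<circ> Inr) (y \<circ> Inr)"
    "lt1 (y \<circ> Inl) (z \<circ> Inl) \<or> y \<circ> Inl = z \<circ> Inl \<and> lt2 (y \<circ> Inr) (z \<circ> Inr)"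
  then show "lt1 (x \<circ> Inl) (z \<circ> Inl) \<or> x \<circ> Inl = z \<circ> Inl \<and> lt2 (x \<circ> Inr) (z \<circ> Inr)"
    using tot_trans[OF t1, of "x \<circ> Inl" "y \<circ> Inl" "z \<circ> Inl"] tot_trans[OF t2, of "x \<circ> Inr" "y \<circ> Inr" "z \<circ> Inr"]
    by auto
next
  fix x y :: "'m + 'l \<Rightarrow> int"
  assume ne: "x \<noteq> y"
  show "(lt1 (x \<circ> Inl) (y \<circ> Inl) \<or> x \<circ> Inl = y \<circ> Inl \<and> lt2 (x \<circ> Inr) (y \<circ> Inr)) \<or>
        (lt1 (y \<circ> Inl) (x \<circ> Inl) \<or> y \<circ> Inl = x \<circ> Inl \<and> lt2 (y \<circ> Inr) (x \<circ> Inr))"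
  proof (cases "x \<circ> Inl = y \<circ> Inl")
    case True
    have "x \<circ> Inr \<noteq> y \<circ> Inr"
    proof
      assume "x \<circ> Inr = y \<circ> Inr"
      then have "join (x \<circ> Inl) (x \<circ> Inr) = join (y \<circ> Inl) (y \<circ> Inr)" using True by simp
      then show False using ne join_split[of x] join_split[of y] by simp
    qed
    then show ?thesis using True tot_total[OF t2, of "x \<circ> Inr" "y \<circ> Inr"] by auto
  next
    case False then show ?thesis using tot_total[OF t1, of "x \<circ> Inl" "y \<circ> Inl"] by auto
  qed
next
  fix x y z :: "'m + 'l \<Rightarrow> int"
  assume "lt1 (x \<circ> Inl) (y \<circ> Inl) \<or> x \<circ> Inl = y \<circ> Inl \<and> lt2 (x \<circ> Inr) (y \<circ> Inr)"
  then show "lt1 ((x + z) \<circ> Inl) ((y + z) \<circ> Inl) \<or>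
         (x + z) \<circ> Inl = (y + z) \<circ> Inl \<and> lt2 ((x + z) \<circ> Inr) ((y + z) \<circ> Inr)"
    using tot_addr[OF t1] tot_addr[OF t2] by auto
qed

lemma nontriv_fun: "\<exists>d::'a \<Rightarrow> int. d \<noteq> 0"
  by (rule exI[of _ "\<lambda>_. 1"]) (simp add: fun_eq_iff)

locale main =
  fixes K :: "'k ring" and A :: "('k, 'b) module" (structure)
    and lt1 :: "('m \<Rightarrow> int) \<Rightarrow> ('m \<Rightarrow> int) \<Rightarrow> bool"
    and lt2 :: "('l \<Rightarrow> int) \<Rightarrow> ('l \<Rightarrow> int) \<Rightarrow> bool"
    and F :: "('m \<Rightarrow> int) \<Rightarrow> 'b set"
    and G :: "('l \<Rightarrow> int) \<Rightarrow> (('m \<Rightarrow> int) \<Rightarrow> 'b set) set"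
  assumes fieldK: "field K" and alg: "algebra K A" and domA: "domain A"
    and tot1: "tot_ordered_group lt1" and tot2: "tot_ordered_group lt2"
    and filtF: "filtration K A lt1 F" and domR: "domain (gr A lt1 F)"
    and filtG: "filtration K (gr A lt1 F) lt2 G" and domS: "domain (gr (gr A lt1 F) lt2 G)"
    and compat: "grading_compatible lt1 F G"

sublocale main \<subseteq> FF: filt_ring A K lt1 F
  using domA tot1 filtF nontriv_fun domR
  unfolding filt_ring_def filt_def filt_ring_axioms_def filt_axioms_def
  by (simp add: domain_def)

sublocale main \<subseteq> GG: filt "gr A lt1 F" K lt2 G
  using domR tot2 filtG nontriv_fun
  unfolding filt_def filt_axioms_def
  by (simp add: domain_def)

context main begin

abbreviation "R \<equiv> gr A lt1 F"
abbreviation "S \<equiv> gr R lt2 G"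
abbreviation "LX \<equiv> lexcomp lt1 lt2"
abbreviation "H \<equiv> compF A lt1 F G"
abbreviation "T \<equiv> gr A LX H"
abbreviation "flt1 \<equiv> flt lt1 F"
abbreviation "Glt \<equiv> flt lt2 G"
abbreviation "Hlt \<equiv> flt LX H"
abbreviation "hc \<equiv> hcls A lt1 F"

lemma module_A: "module K A" using alg by (rule algebra.module)

lemma G_carr: "r \<in> G u \<Longrightarrow> r \<in> carrier R" by (rule GG.F_carr)

lemma zero_R: "\<zero>\<^bsub>R\<^esub> = (\<lambda>w. flt1 w)" by (rule FF.gr_simps(2))

lemma zero_in_G: "\<zero>\<^bsub>R\<^esub> \<in> G u"
  by (rule additive_subgroup.zero_closed[OF GG.F_sg])

lemma zero_in_Glt: "\<zero>\<^bsub>R\<^esub> \<in> Glt u"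
  by (rule additive_subgroup.zero_closed[OF GG.flt_sg])

lemma hc_zero_Glt: "a \<in> flt1 w \<Longrightarrow> hc w a \<in> Glt u"
  using FF.hcls_zero zero_in_Glt by simp

lemma H_iff: "a \<in> H x \<longleftrightarrow> a \<in> F (x \<circ> Inl) \<and> hc (x \<circ> Inl) a \<in> G (x \<circ> Inr)"
  unfolding compF_def using FF.hcls_zero zero_in_G by auto

lemma Hlt_iff: "a \<in> Hlt x \<longleftrightarrow> a \<in> F (x \<circ> Inl) \<and> hc (x \<circ> Inl) a \<in> Glt (x \<circ> Inr)"
proof
  assume "a \<in> Hlt x"
  then obtain y where y: "LX y x" "a \<in> H y" unfolding flt_def by blast
  show "a \<in> F (x \<circ> Inl) \<and> hc (x \<circ> Inl) a \<in> Glt (x \<circ> Inr)"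
  proof (cases "lt1 (y \<circ> Inl) (x \<circ> Inl)")
    case True
    then have "a \<in> flt1 (x \<circ> Inl)" using y(2) FF.F_flt H_iff by blast
    then show ?thesis using FF.flt_F hc_zero_Glt by blast
  next
    case False
    then have "y \<circ> Inl = x \<circ> Inl" "lt2 (y \<circ> Inr) (x \<circ> Inr)" using y(1) unfolding lexcomp_def by auto
    then show ?thesis using y(2) GG.F_flt H_iff by auto
  qed
next
  assume a: "a \<in> F (x \<circ> Inl) \<and> hc (x \<circ> Inl) a \<in> Glt (x \<circ> Inr)"
  then obtain v where v: "lt2 v (x \<circ> Inr)" "hc (x \<circ> Inl) a \<in> G v" using GG.flt_iff by blast
  have "a \<in> H (join (x \<circ> Inl) v)" using a v H_iff by simp
  moreover have "LX (join (x \<circ> Inl) v) x" using v unfolding lexcomp_def by simp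
  ultimately show "a \<in> Hlt x" unfolding flt_def by blast
qed

lemma flt1_Hlt: "flt1 (x \<circ> Inl) \<subseteq> Hlt x"
  using Hlt_iff FF.flt_F hc_zero_Glt by blast

lemma comp_eq_hc:
  assumes r: "r \<in> carrier R"
  shows "(\<lambda>w'. if w' = w then r w else flt1 w') = hc w (crep (r w))"
  unfolding hcls_def using FF.grE(2)[OF r, of w] by (auto simp: fun_eq_iff)

lemma comp_H:
  assumes r: "r \<in> G u"
  shows "crep (r w) \<in> H (join w u)"
proof -
  have rc: "r \<in> carrier R" using G_carr r .
  have "(\<lambda>w'. if w' = w then r w else flt1 w') \<in> G u"
    using compat r unfolding grading_compatible_def by blast
  then have "hc w (crep (r w)) \<in> G u" using comp_eq_hc[OF rc] by simp
  then show ?thesis using FF.grE(1)[OF rc] H_iff by simp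
qed

lemma comp_Hlt:
  assumes r: "r \<in> Glt u"
  shows "crep (r w) \<in> Hlt (join w u)"
proof -
  obtain v where v: "lt2 v u" "r \<in> G v" using r GG.flt_iff by blast
  have rc: "r \<in> carrier R" using G_carr v(2) .
  have "(\<lambda>w'. if w' = w then r w else flt1 w') \<in> G v"
    using compat v(2) unfolding grading_compatible_def by blast
  then have "hc w (crep (r w)) \<in> G v" using comp_eq_hc[OF rc] by simp
  then have "hc w (crep (r w)) \<in> Glt u" using GG.F_flt[OF v(1)] by blast
  then show ?thesis using FF.grE(1)[OF rc] Hlt_iff by simp
qed

lemma H_submod: "submodule (H x) K A"
proof (rule module.submoduleI[OF module_A])
  show "H x \<subseteq> carrier A" using H_iff FF.F_carr by blast
  show "\<zero> \<in> H x" using H_iff additive_subgroup.zero_closed[OF FF.F_sg] FF.hcls_zero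
      additive_subgroup.zero_closed[OF FF.flt_sg] zero_in_G by simp
  fix a assume a: "a \<in> H x"
  then have aF: "a \<in> F (x \<circ> Inl)" and aG: "hc (x \<circ> Inl) a \<in> G (x \<circ> Inr)" using H_iff by auto
  show "\<ominus> a \<in> H x" using H_iff additive_subgroup.a_inv_closed[OF FF.F_sg aF]
      FF.hcls_neg[OF aF] additive_subgroup.a_inv_closed[OF GG.F_sg aG] by simp
next
  fix a b assume a: "a \<in> H x" and b: "b \<in> H x"
  then have aF: "a \<in> F (x \<circ> Inl)" and aG: "hc (x \<circ> Inl) a \<in> G (x \<circ> Inr)"
    and bF: "b \<in> F (x \<circ> Inl)" and bG: "hc (x \<circ> Inl) b \<in> G (x \<circ> Inr)" using H_iff by auto
  show "a \<oplus> b \<in> H x" using H_iff additive_subgroup.a_closed[OF FF.F_sg aF bF]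
      FF.hcls_add[OF aF bF] additive_subgroup.a_closed[OF GG.F_sg aG bG] by simp
next
  fix c a assume c: "c \<in> carrier K" and a: "a \<in> H x"
  then have aF: "a \<in> F (x \<circ> Inl)" and aG: "hc (x \<circ> Inl) a \<in> G (x \<circ> Inr)" using H_iff by auto
  have smc: "\<And>y. y \<in> carrier A \<Longrightarrow> c \<odot>\<^bsub>A\<^esub> y \<in> carrier A" using module.smult_closed[OF module_A c] .
  have smd: "\<And>y z. y \<in> carrier A \<Longrightarrow> z \<in> carrier A \<Longrightarrow> c \<odot>\<^bsub>A\<^esub> (y \<ominus> z) = c \<odot>\<^bsub>A\<^esub> y \<ominus> c \<odot>\<^bsub>A\<^esub> z"
    using module.smult_r_distr[OF module_A c] module.smult_r_minus[OF module_A c]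
    by (simp add: a_minus_def)
  show "c \<odot>\<^bsub>A\<^esub> a \<in> H x" using H_iff FF.F_smult[OF c aF]
      FF.hcls_smult[OF aF c smc smd] GG.F_smult[OF c aG] by simp
qed

lemma H_filt: "filtration K A LX H"
  unfolding filtration_def
proof (intro conjI allI ballI impI)
  fix x show "submodule (H x) K A" by (rule H_submod)
next
  fix x y assume xy: "LX x y"
  show "H x \<subseteq> H y"
  proof
    fix a assume a: "a \<in> H x"
    show "a \<in> H y"
    proof (cases "lt1 (x \<circ> Inl) (y \<circ> Inl)")
      case True
      then have "a \<in> flt1 (y \<circ> Inl)" using a FF.F_flt H_iff by blast
      then show ?thesis using H_iff FF.flt_F FF.hcls_zero zero_in_G by auto
    next
      case False
      then have "x \<circ> Inl = y \<circ> Inl" "lt2 (x \<circ> Inr) (y \<circ> Inr)" using xy unfolding lexcomp_def by auto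
      then show ?thesis using a GG.F_mono H_iff by auto
    qed
  qed
next
  fix x y a b assume a: "a \<in> H x" and b: "b \<in> H y"
  then have aF: "a \<in> F (x \<circ> Inl)" and aG: "hc (x \<circ> Inl) a \<in> G (x \<circ> Inr)"
    and bF: "b \<in> F (y \<circ> Inl)" and bG: "hc (y \<circ> Inl) b \<in> G (y \<circ> Inr)" using H_iff by auto
  show "a \<otimes> b \<in> H (x + y)" using H_iff FF.F_mult[OF aF bF] FF.hcls_mult[OF aF bF, symmetric]
      GG.F_mult[OF aG bG] by simp
next
  show "(\<Union>x. H x) = carrier A"
  proof
    show "(\<Union>x. H x) \<subseteq> carrier A" using H_iff FF.F_carr by blast
    show "carrier A \<subseteq> (\<Union>x. H x)"
    proof
      fix a assume a: "a \<in> carrier A"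
      then obtain w where w: "a \<in> F w" using FF.F_union by blast
      then obtain u where u: "hc w a \<in> G u" using GG.F_union[OF FF.hcls_carr[OF w]] by blast
      have "a \<in> H (join w u)" using H_iff w u by simp
      then show "a \<in> (\<Union>x. H x)" by blast
    qed
  qed
qed

end

sublocale main \<subseteq> HH: filt A K LX H
  using domA lex_tot[OF tot1 tot2] H_filt nontriv_fun
  unfolding filt_def filt_axioms_def
  by (simp add: domain_def)

definition av :: "(('l \<Rightarrow> int) \<Rightarrow> (('m \<Rightarrow> int) \<Rightarrow> 'b set) set) \<Rightarrow> ('m + 'l \<Rightarrow> int) \<Rightarrow> 'b" where
  "av s x = crep ((crep (s (x \<circ> Inr))) (x \<circ> Inl))"

sublocale main \<subseteq> SS: domain "gr (gr A lt1 F) lt2 G" by (rule domS)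

context main begin

definition psi :: "(('l \<Rightarrow> int) \<Rightarrow> (('m \<Rightarrow> int) \<Rightarrow> 'b set) set) \<Rightarrow> ('m + 'l \<Rightarrow> int) \<Rightarrow> 'b set" where
  "psi s = (\<lambda>x. Hlt x +> av s x)"

lemma av_H:
  assumes s: "s \<in> carrier S"
  shows "av s x \<in> H x"
  using comp_H[OF GG.grE(1)[OF s, of "x \<circ> Inr"], of "x \<circ> Inl"] join_split[of x]
  unfolding av_def by simp

lemma av_carr: "s \<in> carrier S \<Longrightarrow> av s x \<in> carrier A"
  using av_H HH.F_carr by blast

lemma cos_up:
  assumes a: "a \<in> carrier A" and b: "b \<in> carrier A" and e: "flt1 w +> a = flt1 w +> b"
  shows "Hlt (join w u) +> a = Hlt (join w u) +> b"
  using FF.cos_mono[OF FF.flt_sg HH.flt_sg _ a b e] flt1_Hlt[of "join w u"] by simp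

lemma cong_comp:
  assumes r: "r \<in> G u" and r': "r' \<in> G u" and e: "Glt u +>\<^bsub>R\<^esub> r = Glt u +>\<^bsub>R\<^esub> r'"
  shows "Hlt (join w u) +> crep (r w) = Hlt (join w u) +> crep (r' w)"
proof -
  have rc: "r \<in> carrier R" and r'c: "r' \<in> carrier R" using r r' G_carr by auto
  define d where "d = r \<ominus>\<^bsub>R\<^esub> r'"
  have dG: "d \<in> Glt u" unfolding d_def using FF.GR.coset_eq_iff[OF GG.flt_sg rc r'c] e by simp
  have cs: "crep (r w) \<in> carrier A" "crep (r' w) \<in> carrier A" "crep (d w) \<in> carrier A"
    using FF.grE(3) rc r'c FF.GR.minus_closed[OF rc r'c] unfolding d_def by auto
  have "flt1 w +> crep (d w) = flt1 w +> (crep (r w) \<ominus> crep (r' w))"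
    unfolding d_def by (rule FF.comp_minus[OF rc r'c])
  then have e1: "Hlt (join w u) +> crep (d w) = Hlt (join w u) +> (crep (r w) \<ominus> crep (r' w))"
    by (rule cos_up[OF cs(3) FF.minus_closed[OF cs(1,2)]])
  have e2: "Hlt (join w u) +> crep (d w) = Hlt (join w u)"
    using comp_Hlt[OF dG] by (rule FF.coset_self[OF HH.flt_sg])
  have "Hlt (join w u) +> (crep (r w) \<ominus> crep (r' w)) = Hlt (join w u)"
    by (rule trans[OF e1[symmetric] e2])
  then have "crep (r w) \<ominus> crep (r' w) \<in> Hlt (join w u)"
    using FF.cos_mem_iff[OF HH.flt_sg FF.minus_closed[OF cs(1,2)]] by simp
  then show ?thesis using FF.coset_eq_iff[OF HH.flt_sg] cs by simp
qed

lemma av_cos: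
  assumes s: "s \<in> carrier S" and q: "q \<in> G u" and e: "s u = Glt u +>\<^bsub>R\<^esub> q"
  shows "Hlt (join w u) +> av s (join w u) = Hlt (join w u) +> crep (q w)"
proof -
  have "Glt u +>\<^bsub>R\<^esub> crep (s u) = s u" using GG.grE(2)[OF s, of u] by (rule sym)
  then have "Glt u +>\<^bsub>R\<^esub> crep (s u) = Glt u +>\<^bsub>R\<^esub> q" using e by (rule trans)
  then show ?thesis unfolding av_def using cong_comp[OF GG.grE(1)[OF s] q] by simp
qed

lemma av_Hlt:
  assumes s: "s \<in> carrier S"
    and z: "s (x \<circ> Inr) = Glt (x \<circ> Inr) \<or> crep (s (x \<circ> Inr)) (x \<circ> Inl) = flt1 (x \<circ> Inl)"
  shows "av s x \<in> Hlt x"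
  using z
proof
  assume "s (x \<circ> Inr) = Glt (x \<circ> Inr)"
  then have "crep (s (x \<circ> Inr)) \<in> Glt (x \<circ> Inr)" using GG.gr_zero_iff[OF s] by simp
  from comp_Hlt[OF this, of "x \<circ> Inl"] show ?thesis unfolding av_def using join_split[of x] by simp
next
  assume "crep (s (x \<circ> Inr)) (x \<circ> Inl) = flt1 (x \<circ> Inl)"
  then have "crep (crep (s (x \<circ> Inr)) (x \<circ> Inl)) \<in> flt1 (x \<circ> Inl)"
    using FF.gr_zero_iff[OF G_carr[OF GG.grE(1)[OF s]]] by simp
  then show ?thesis unfolding av_def using flt1_Hlt by blast
qed

lemma psi_zero_iff:
  assumes s: "s \<in> carrier S"
  shows "psi s x = Hlt x \<longleftrightarrow> av s x \<in> Hlt x"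
  unfolding psi_def using FF.cos_mem_iff[OF HH.flt_sg av_carr[OF s]] by simp

definition Psupp where
  "Psupp s = (\<lambda>(u, w). join w u) ` (SIGMA u:{u. s u \<noteq> Glt u}. {w. crep (s u) w \<noteq> flt1 w})"

lemma Psupp_fin:
  assumes s: "s \<in> carrier S"
  shows "finite (Psupp s)"
  unfolding Psupp_def
  using GG.grE(4)[OF s] FF.grE(4)[OF G_carr[OF GG.grE(1)[OF s]]] by auto

lemma Psupp_mem:
  assumes s: "s \<in> carrier S" and x: "av s x \<notin> Hlt x"
  shows "x \<in> Psupp s"
proof -
  have "s (x \<circ> Inr) \<noteq> Glt (x \<circ> Inr)" "crep (s (x \<circ> Inr)) (x \<circ> Inl) \<noteq> flt1 (x \<circ> Inl)"
    using av_Hlt[OF s] x by auto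
  then show ?thesis unfolding Psupp_def using join_split[of x]
    by (auto intro!: image_eqI[of _ _ "(x \<circ> Inr, x \<circ> Inl)"])
qed

lemma psi_carr:
  assumes s: "s \<in> carrier S"
  shows "psi s \<in> carrier T"
proof -
  have "{x. psi s x \<noteq> Hlt x} \<subseteq> Psupp s" using Psupp_mem[OF s] psi_zero_iff[OF s] by blast
  then have "finite {x. psi s x \<noteq> Hlt x}" using Psupp_fin[OF s] finite_subset by blast
  moreover have "\<forall>x. \<exists>a\<in>H x. psi s x = Hlt x +> a" unfolding psi_def using av_H[OF s] by blast
  ultimately show ?thesis unfolding HH.gr_simps(1) gr_carrier_def by blast
qed

lemma crep_psi:
  assumes s: "s \<in> carrier S"
  shows "Hlt x +> crep (psi s x) = Hlt x +> av s x"
  unfolding psi_def by (rule FF.cos_crep[OF HH.flt_sg av_carr[OF s]])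

lemma crep_psi_carr: "s \<in> carrier S \<Longrightarrow> crep (psi s x) \<in> carrier A"
  using HH.grE(3)[OF psi_carr] by blast

lemma psi_add:
  assumes s1: "s1 \<in> carrier S" and s2: "s2 \<in> carrier S"
  shows "psi (s1 \<oplus>\<^bsub>S\<^esub> s2) = psi s1 \<oplus>\<^bsub>T\<^esub> psi s2"
proof (rule ext)
  fix x :: "'m + 'l \<Rightarrow> int"
  define w where "w = x \<circ> Inl"
  define u where "u = x \<circ> Inr"
  have x: "x = join w u" unfolding w_def u_def by (rule join_split[symmetric])
  define r1 where "r1 = crep (s1 u)"
  define r2 where "r2 = crep (s2 u)"
  have r: "r1 \<in> G u" "r2 \<in> G u" unfolding r1_def r2_def using GG.grE(1) s1 s2 by auto
  have rc: "r1 \<in> carrier R" "r2 \<in> carrier R" using r G_carr by auto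
  have sc: "s1 \<oplus>\<^bsub>S\<^esub> s2 \<in> carrier S" using s1 s2 by simp
  have e: "(s1 \<oplus>\<^bsub>S\<^esub> s2) u = Glt u +>\<^bsub>R\<^esub> (r1 \<oplus>\<^bsub>R\<^esub> r2)"
    unfolding r1_def r2_def by (rule GG.gr_add_cos[OF s1 s2])
  have rG: "r1 \<oplus>\<^bsub>R\<^esub> r2 \<in> G u" using additive_subgroup.a_closed[OF GG.F_sg r] .
  have c1: "crep (r1 w) \<in> carrier A" "crep (r2 w) \<in> carrier A" using FF.grE(3) rc by auto
  have "psi (s1 \<oplus>\<^bsub>S\<^esub> s2) x = Hlt x +> crep ((r1 \<oplus>\<^bsub>R\<^esub> r2) w)"
    unfolding psi_def x using av_cos[OF sc rG e] .
  also have "\<dots> = Hlt x +> (crep (r1 w) \<oplus> crep (r2 w))"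
    unfolding x using cos_up[OF FF.grE(3)[OF FF.GR.add.m_closed[OF rc]] FF.add.m_closed[OF c1] FF.comp_add[OF rc]] .
  also have "\<dots> = Hlt x +> (crep (psi s1 x) \<oplus> crep (psi s2 x))"
  proof (rule FF.cos_add[OF HH.flt_sg c1(1) crep_psi_carr[OF s1] c1(2) crep_psi_carr[OF s2]])
    show "Hlt x +> crep (r1 w) = Hlt x +> crep (psi s1 x)"
      using crep_psi[OF s1, of x] unfolding av_def r1_def w_def u_def by simp
    show "Hlt x +> crep (r2 w) = Hlt x +> crep (psi s2 x)"
      using crep_psi[OF s2, of x] unfolding av_def r2_def w_def u_def by simp
  qed
  also have "\<dots> = (psi s1 \<oplus>\<^bsub>T\<^esub> psi s2) x" by (rule HH.gr_add_cos[symmetric, OF psi_carr[OF s1] psi_carr[OF s2]])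
  finally show "psi (s1 \<oplus>\<^bsub>S\<^esub> s2) x = (psi s1 \<oplus>\<^bsub>T\<^esub> psi s2) x" .
qed

end

context main begin

lemma smd:
  assumes c: "c \<in> carrier K" and y: "y \<in> carrier A" and z: "z \<in> carrier A"
  shows "c \<odot>\<^bsub>A\<^esub> (y \<ominus> z) = c \<odot>\<^bsub>A\<^esub> y \<ominus> c \<odot>\<^bsub>A\<^esub> z"
  using module.smult_r_distr[OF module_A c y] module.smult_r_minus[OF module_A c z] y z
  by (simp add: a_minus_def)

lemma smc: "c \<in> carrier K \<Longrightarrow> y \<in> carrier A \<Longrightarrow> c \<odot>\<^bsub>A\<^esub> y \<in> carrier A"
  using module.smult_closed[OF module_A] by blast

lemma cos_smult:
  assumes c: "c \<in> carrier K" and a: "a \<in> carrier A" and b: "b \<in> carrier A"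
    and e: "Hlt x +> a = Hlt x +> b"
  shows "Hlt x +> (c \<odot>\<^bsub>A\<^esub> a) = Hlt x +> (c \<odot>\<^bsub>A\<^esub> b)"
proof -
  have "a \<ominus> b \<in> Hlt x" using FF.coset_eq_iff[OF HH.flt_sg a b] e by simp
  then have "c \<odot>\<^bsub>A\<^esub> (a \<ominus> b) \<in> Hlt x" using HH.flt_smult[OF c] by blast
  then have "c \<odot>\<^bsub>A\<^esub> a \<ominus> c \<odot>\<^bsub>A\<^esub> b \<in> Hlt x" using smd[OF c a b] by simp
  then show ?thesis using FF.coset_eq_iff[OF HH.flt_sg smc[OF c a] smc[OF c b]] by simp
qed

lemma psi_hcls:
  assumes a: "a \<in> H x"
  shows "psi (hcls R lt2 G (x \<circ> Inr) (hc (x \<circ> Inl) a)) = hcls A LX H x a"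
proof (rule ext)
  fix y :: "'m + 'l \<Rightarrow> int"
  define w where "w = x \<circ> Inl"
  define u where "u = x \<circ> Inr"
  define w' where "w' = y \<circ> Inl"
  define u' where "u' = y \<circ> Inr"
  have xj: "x = join w u" unfolding w_def u_def by (rule join_split[symmetric])
  have yj: "y = join w' u'" unfolding w'_def u'_def by (rule join_split[symmetric])
  have aF: "a \<in> F w" and hG: "hc w a \<in> G u" using a H_iff unfolding w_def u_def by auto
  have ac: "a \<in> carrier A" using FF.F_carr[OF aF] .
  define s where "s = hcls R lt2 G u (hc w a)"
  have sc: "s \<in> carrier S" unfolding s_def by (rule GG.hcls_carr[OF hG])
  show "psi (hcls R lt2 G (x \<circ> Inr) (hc (x \<circ> Inl) a)) y = hcls A LX H x a y"
  proof (cases "u' = u")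
    case True
    have e: "s u' = Glt u' +>\<^bsub>R\<^esub> hc w a" unfolding s_def using True GG.hcls_at(1) by simp
    have hG': "hc w a \<in> G u'" using hG True by simp
    have "psi s y = Hlt y +> crep (hc w a w')" unfolding psi_def yj using av_cos[OF sc hG' e] .
    also have "\<dots> = Hlt y +> (if w' = w then a else \<zero>)"
      unfolding yj using cos_up[OF FF.grE(3)[OF FF.hcls_carr[OF aF]] _ FF.crep_hcls[OF aF, of w']] ac by simp
    finally have ps: "psi s y = Hlt y +> (if w' = w then a else \<zero>)" .
    show ?thesis
    proof (cases "w' = w")
      case True
      then have "y = x" using xj yj \<open>u' = u\<close> by simp
      then show ?thesis using ps True HH.hcls_at(1) unfolding s_def w_def u_def by simp
    next
      case False
      then have "y \<noteq> x" using xj yj join_inj[of w' u' w u] by simp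
      then show ?thesis using ps False HH.hcls_at(2) FF.cos_zero_eq[OF HH.flt_sg]
        unfolding s_def w_def u_def by simp
    qed
  next
    case False
    have e: "s u' = Glt u' +>\<^bsub>R\<^esub> \<zero>\<^bsub>R\<^esub>" unfolding s_def
      using False GG.hcls_at(2) FF.GR.cos_zero_eq[OF GG.flt_sg] by simp
    have "psi s y = Hlt y +> crep (\<zero>\<^bsub>R\<^esub> w')" unfolding psi_def yj using av_cos[OF sc zero_in_G e] .
    also have "crep (\<zero>\<^bsub>R\<^esub> w') \<in> Hlt y" using FF.crep_flt[of w'] flt1_Hlt[of y] zero_R
      unfolding w'_def by auto
    then have "Hlt y +> crep (\<zero>\<^bsub>R\<^esub> w') = Hlt y" by (rule FF.coset_self[OF HH.flt_sg])
    finally have "psi s y = Hlt y" .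
    moreover have "y \<noteq> x" using False xj yj join_inj[of w' u' w u] by simp
    ultimately show ?thesis using HH.hcls_at(2) unfolding s_def w_def u_def by simp
  qed
qed

lemma one_in_H: "\<one> \<in> H 0"
proof -
  have r1: "\<one>\<^bsub>R\<^esub> \<in> carrier R" by (rule FF.GR.one_closed)
  then have "\<one> \<in> F 0" using FF.hcls_mem_F[OF FF.one_closed] FF.gr_simps(3) by simp
  moreover have "\<one>\<^bsub>R\<^esub> \<in> G 0" using GG.hcls_mem_F[OF r1] SS.one_closed GG.gr_simps(3) by simp
  ultimately show ?thesis using H_iff FF.gr_simps(3) by simp
qed

lemma psi_one: "psi \<one>\<^bsub>S\<^esub> = \<one>\<^bsub>T\<^esub>"
  using psi_hcls[OF one_in_H] GG.gr_simps(3) FF.gr_simps(3) HH.gr_simps(3) by simp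

lemma psi_zero: "psi \<zero>\<^bsub>S\<^esub> = \<zero>\<^bsub>T\<^esub>"
proof (rule ext)
  fix x :: "'m + 'l \<Rightarrow> int"
  have "av \<zero>\<^bsub>S\<^esub> x \<in> Hlt x" by (rule av_Hlt[OF SS.zero_closed]) (simp add: GG.gr_simps(2))
  then show "psi \<zero>\<^bsub>S\<^esub> x = \<zero>\<^bsub>T\<^esub> x" using psi_zero_iff[OF SS.zero_closed] HH.gr_simps(2) by simp
qed

lemma psi_smult:
  assumes c: "c \<in> carrier K" and s: "s \<in> carrier S"
  shows "psi (c \<odot>\<^bsub>S\<^esub> s) = c \<odot>\<^bsub>T\<^esub> psi s"
proof (rule ext)
  fix x :: "'m + 'l \<Rightarrow> int"
  define w where "w = x \<circ> Inl"
  define u where "u = x \<circ> Inr"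
  have xj: "x = join w u" unfolding w_def u_def by (rule join_split[symmetric])
  define r where "r = crep (s u)"
  have rG: "r \<in> G u" unfolding r_def by (rule GG.grE(1)[OF s])
  have rc: "r \<in> carrier R" using G_carr[OF rG] .
  have crG: "c \<odot>\<^bsub>R\<^esub> r \<in> G u" using GG.F_smult[OF c rG] .
  have scS: "c \<odot>\<^bsub>S\<^esub> s \<in> carrier S" by (rule GG.gr_smult_carr[OF c s])
  have e: "(c \<odot>\<^bsub>S\<^esub> s) u = Glt u +>\<^bsub>R\<^esub> (c \<odot>\<^bsub>R\<^esub> r)" unfolding r_def GG.gr_simps(5) by simp
  have cr: "crep (r w) \<in> carrier A" using FF.grE(3)[OF rc] .
  have "psi (c \<odot>\<^bsub>S\<^esub> s) x = Hlt x +> crep ((c \<odot>\<^bsub>R\<^esub> r) w)"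
    unfolding psi_def xj using av_cos[OF scS crG e] .
  also have "\<dots> = Hlt x +> (c \<odot>\<^bsub>A\<^esub> crep (r w))"
  proof -
    have "flt1 w +> crep ((c \<odot>\<^bsub>R\<^esub> r) w) = flt1 w +> (c \<odot>\<^bsub>A\<^esub> crep (r w))"
      unfolding FF.gr_simps(5) using FF.crep_cos[OF smc[OF c cr]] by simp
    then show ?thesis unfolding xj
      using cos_up[OF FF.grE(3)[OF FF.gr_smult_carr[OF c rc]] smc[OF c cr]] by simp
  qed
  also have "\<dots> = Hlt x +> (c \<odot>\<^bsub>A\<^esub> crep (psi s x))"
  proof (rule cos_smult[OF c cr crep_psi_carr[OF s]])
    show "Hlt x +> crep (r w) = Hlt x +> crep (psi s x)"
      using crep_psi[OF s, of x] unfolding av_def r_def w_def u_def by simp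
  qed
  also have "\<dots> = (c \<odot>\<^bsub>T\<^esub> psi s) x" unfolding HH.gr_simps(5) by simp
  finally show "psi (c \<odot>\<^bsub>S\<^esub> s) x = (c \<odot>\<^bsub>T\<^esub> psi s) x" .
qed

end

context main begin

lemma psi_inj:
  assumes s1: "s1 \<in> carrier S" and s2: "s2 \<in> carrier S" and e: "psi s1 = psi s2"
  shows "s1 = s2"
proof (rule ext)
  fix u :: "'l \<Rightarrow> int"
  define r1 where "r1 = crep (s1 u)"
  define r2 where "r2 = crep (s2 u)"
  have r: "r1 \<in> G u" "r2 \<in> G u" unfolding r1_def r2_def using GG.grE(1) s1 s2 by auto
  have rc: "r1 \<in> carrier R" "r2 \<in> carrier R" using r G_carr by auto
  define d where "d = r1 \<ominus>\<^bsub>R\<^esub> r2"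
  have dc: "d \<in> carrier R" unfolding d_def using FF.GR.minus_closed[OF rc] .
  have comp: "hc w (crep (d w)) \<in> Glt u" for w
  proof -
    define j where "j = join w u"
    have cs: "crep (r1 w) \<in> carrier A" "crep (r2 w) \<in> carrier A" "crep (d w) \<in> carrier A"
      using FF.grE(3) rc dc by auto
    have "Hlt j +> av s1 j = Hlt j +> av s2 j" using e unfolding psi_def by metis
    then have "Hlt j +> crep (r1 w) = Hlt j +> crep (r2 w)" unfolding av_def r1_def r2_def j_def by simp
    then have m: "crep (r1 w) \<ominus> crep (r2 w) \<in> Hlt j" using FF.coset_eq_iff[OF HH.flt_sg cs(1,2)] by simp
    have "flt1 w +> crep (d w) = flt1 w +> (crep (r1 w) \<ominus> crep (r2 w))"
      unfolding d_def by (rule FF.comp_minus[OF rc])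
    then have "Hlt j +> crep (d w) = Hlt j +> (crep (r1 w) \<ominus> crep (r2 w))"
      unfolding j_def by (rule cos_up[OF cs(3) FF.minus_closed[OF cs(1,2)]])
    also have "\<dots> = Hlt j" using m by (rule FF.coset_self[OF HH.flt_sg])
    finally have "crep (d w) \<in> Hlt j" using FF.cos_mem_iff[OF HH.flt_sg cs(3)] by simp
    then show ?thesis using Hlt_iff unfolding j_def by simp
  qed
  have "d = finsum R (\<lambda>w. hc w (crep (d w))) {w. d w \<noteq> flt1 w}" by (rule FF.decomp[OF dc])
  also have "\<dots> \<in> Glt u"
    by (intro FF.GR.sg_finsum[OF GG.flt_sg FF.grE(4)[OF dc]] Pi_I comp)
  finally have "d \<in> Glt u" .
  then have "Glt u +>\<^bsub>R\<^esub> r1 = Glt u +>\<^bsub>R\<^esub> r2"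
    using FF.GR.coset_eq_iff[OF GG.flt_sg rc] unfolding d_def by simp
  then show "s1 u = s2 u" using GG.grE(2)[OF s1, of u] GG.grE(2)[OF s2, of u]
    unfolding r1_def r2_def by simp
qed

lemma psi_surj:
  assumes t: "t \<in> carrier T"
  shows "\<exists>s\<in>carrier S. psi s = t"
proof -
  define Ts where "Ts = {x. t x \<noteq> Hlt x}"
  have Tsf: "finite Ts" unfolding Ts_def using HH.grE(4)[OF t] .
  define W where "W u = {w. t (join w u) \<noteq> Hlt (join w u)}" for u
  have Wf: "finite (W u)" for u
  proof -
    have "W u = (\<lambda>w. join w u) -` Ts" unfolding W_def Ts_def by auto
    moreover have "inj (\<lambda>w. join w u)" using join_inj by (auto simp: inj_on_def)
    ultimately show ?thesis using finite_vimageI[OF Tsf] by metis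
  qed
  define b where "b w u = crep (t (join w u))" for w u
  have bH: "b w u \<in> H (join w u)" for w u unfolding b_def using HH.grE(1)[OF t] .
  have bF: "b w u \<in> F w" for w u using bH[of w u] H_iff by simp
  have hG: "hc w (b w u) \<in> G u" for w u using bH[of w u] H_iff by simp
  define q where "q u = finsum R (\<lambda>w. hc w (b w u)) (W u)" for u
  have hfun: "(\<lambda>w. hc w (b w u)) \<in> W u \<rightarrow> carrier R" for u using FF.hcls_carr[OF bF] by blast
  have qG: "q u \<in> G u" for u unfolding q_def by (intro FF.GR.sg_finsum[OF GG.F_sg Wf] Pi_I hG)
  define s where "s u = Glt u +>\<^bsub>R\<^esub> q u" for u
  have sc: "s \<in> carrier S"
  proof -
    have "\<forall>u. \<exists>x\<in>G u. s u = Glt u +>\<^bsub>R\<^esub> x" unfolding s_def using qG by blast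
    moreover have "{u. s u \<noteq> Glt u} \<subseteq> (\<lambda>x. x \<circ> Inr) ` Ts"
    proof
      fix u assume u: "u \<in> {u. s u \<noteq> Glt u}"
      have "W u \<noteq> {}"
      proof
        assume "W u = {}"
        then have "q u = \<zero>\<^bsub>R\<^esub>" unfolding q_def by simp
        then have "s u = Glt u" unfolding s_def using FF.GR.cos_zero_eq[OF GG.flt_sg] by simp
        then show False using u by simp
      qed
      then obtain w where "w \<in> W u" by blast
      then have "join w u \<in> Ts" unfolding W_def Ts_def by simp
      then show "u \<in> (\<lambda>x. x \<circ> Inr) ` Ts" by (auto intro!: image_eqI[of _ _ "join w u"])
    qed
    then have "finite {u. s u \<noteq> Glt u}" using finite_subset Tsf by blast
    ultimately show ?thesis unfolding GG.gr_simps(1) gr_carrier_def by blast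
  qed
  have "psi s = t"
  proof (rule ext)
    fix x :: "'m + 'l \<Rightarrow> int"
    define w where "w = x \<circ> Inl"
    define u where "u = x \<circ> Inr"
    have xj: "x = join w u" unfolding w_def u_def by (rule join_split[symmetric])
    have e: "s u = Glt u +>\<^bsub>R\<^esub> q u" unfolding s_def ..
    have qc: "q u \<in> carrier R" using G_carr[OF qG] .
    have bc: "b w' u \<in> carrier A" for w' using FF.F_carr[OF bF] .
    have "psi s x = Hlt x +> crep (q u w)" unfolding psi_def xj using av_cos[OF sc qG e] .
    also have "\<dots> = Hlt x +> (if w \<in> W u then b w u else \<zero>)"
    proof -
      have "flt1 w +> crep (q u w) = flt1 w +> finsum A (\<lambda>w'. crep (hc w' (b w' u) w)) (W u)"
        unfolding q_def by (rule FF.comp_finsum[OF Wf hfun])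
      also have "\<dots> = flt1 w +> finsum A (\<lambda>w'. if w = w' then b w' u else \<zero>) (W u)"
      proof (rule FF.cos_sum[OF FF.flt_sg Wf])
        show "(\<lambda>w'. crep (hc w' (b w' u) w)) \<in> W u \<rightarrow> carrier A"
          using FF.grE(3)[OF FF.hcls_carr[OF bF]] by blast
        show "(\<lambda>w'. if w = w' then b w' u else \<zero>) \<in> W u \<rightarrow> carrier A" using bc by simp
        fix w' assume "w' \<in> W u"
        show "flt1 w +> crep (hc w' (b w' u) w) = flt1 w +> (if w = w' then b w' u else \<zero>)"
          by (rule FF.crep_hcls[OF bF])
      qed
      also have "\<dots> = flt1 w +> (if w \<in> W u then b w u else \<zero>)"
      proof (cases "w \<in> W u")
        case True
        have "(\<lambda>w'. b w' u) \<in> W u \<rightarrow> carrier A" using bc by simp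
        from FF.add.finprod_singleton[OF True Wf this] show ?thesis using True by simp
      next
        case False
        then have "finsum A (\<lambda>w'. if w = w' then b w' u else \<zero>) (W u) = finsum A (\<lambda>w'. \<zero>) (W u)"
          by (intro FF.finsum_cong') (use False in auto)
        then show ?thesis using False by simp
      qed
      finally have "flt1 w +> crep (q u w) = flt1 w +> (if w \<in> W u then b w u else \<zero>)" .
      moreover have bcc: "(if w \<in> W u then b w u else \<zero>) \<in> carrier A" using bc by simp
      ultimately show ?thesis unfolding xj
        by (intro cos_up[OF FF.grE(3)[OF qc] bcc])
    qed
    also have "\<dots> = t x"
    proof (cases "w \<in> W u")
      case True
      then show ?thesis using HH.grE(2)[OF t, of x] unfolding b_def xj by simp
    next
      case False
      then have "t x = Hlt x" unfolding W_def xj by simp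
      then show ?thesis using False FF.cos_zero_eq[OF HH.flt_sg] by simp
    qed
    finally show "psi s x = t x" .
  qed
  then show ?thesis using sc by blast
qed

lemma psi_bij: "bij_betw psi (carrier S) (carrier T)"
  unfolding bij_betw_def inj_on_def
  using psi_inj psi_carr psi_surj by blast

end

lemma (in abelian_monoid) finsum_Sigma:
  assumes fin: "finite U" and finV: "\<And>u. u \<in> U \<Longrightarrow> finite (V u)"
    and g: "\<And>u v. u \<in> U \<Longrightarrow> v \<in> V u \<Longrightarrow> g (u, v) \<in> carrier G"
  shows "finsum G (\<lambda>u. finsum G (\<lambda>v. g (u, v)) (V u)) U = finsum G g (Sigma U V)"
  using fin finV g
proof (induction U rule: finite_induct)
  case empty
  then show ?case by simp
next
  case (insert a U)
  have inner: "(\<lambda>u. finsum G (\<lambda>v. g (u, v)) (V u)) \<in> U \<rightarrow> carrier G"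
    using insert by (auto intro!: finsum_closed)
  have "finsum G (\<lambda>u. finsum G (\<lambda>v. g (u, v)) (V u)) (insert a U)
      = finsum G (\<lambda>v. g (a, v)) (V a) \<oplus> finsum G (\<lambda>u. finsum G (\<lambda>v. g (u, v)) (V u)) U"
    using insert inner by (intro finsum_insert) (auto intro!: finsum_closed)
  also have "finsum G (\<lambda>u. finsum G (\<lambda>v. g (u, v)) (V u)) U = finsum G g (Sigma U V)"
    using insert by auto
  also have "finsum G (\<lambda>v. g (a, v)) (V a) = finsum G g (Pair a ` V a)"
    using insert by (intro finsum_reindex[symmetric]) (auto simp: inj_on_def)
  also have "finsum G g (Pair a ` V a) \<oplus> finsum G g (Sigma U V) = finsum G g (Pair a ` V a \<union> Sigma U V)"
    using insert by (intro finsum_Un_disjoint[symmetric]) auto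
  also have "Pair a ` V a \<union> Sigma U V = Sigma (insert a U) V" by auto
  finally show ?case .
qed

context filt begin

lemma mult_cong:
  assumes a: "a \<in> carrier A" and a': "a' \<in> F y" and ea: "flt lt F y +> a = flt lt F y +> a'"
    and b: "b \<in> F z" and b': "b' \<in> carrier A" and eb: "flt lt F z +> b = flt lt F z +> b'"
  shows "flt lt F (y + z) +> (a \<otimes> b) = flt lt F (y + z) +> (a' \<otimes> b')"
proof -
  have ac: "a' \<in> carrier A" "b \<in> carrier A" using a' b F_carr by auto
  have d1: "a \<ominus> a' \<in> flt lt F y" using coset_eq_iff[OF flt_sg a ac(1)] ea by simp
  have d2: "b \<ominus> b' \<in> flt lt F z" using coset_eq_iff[OF flt_sg ac(2) b'] eb by simp
  have "a \<otimes> b \<ominus> a' \<otimes> b' = (a \<ominus> a') \<otimes> b \<oplus> a' \<otimes> (b \<ominus> b')"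
    using a ac b'
    by (simp add: a_minus_def l_distr r_distr l_minus r_minus a_assoc)
       (simp add: a_assoc[symmetric] r_neg l_neg)
  moreover have "(a \<ominus> a') \<otimes> b \<in> flt lt F (y + z)" using flt_multl[OF d1 b] .
  moreover have "a' \<otimes> (b \<ominus> b') \<in> flt lt F (y + z)" using flt_multr[OF a' d2] .
  ultimately have "a \<otimes> b \<ominus> a' \<otimes> b' \<in> flt lt F (y + z)"
    using additive_subgroup.a_closed[OF flt_sg] by simp
  then show ?thesis using coset_eq_iff[OF flt_sg] a ac b' by simp
qed

end

context main begin

lemma psi_mult:
  assumes s1: "s1 \<in> carrier S" and s2: "s2 \<in> carrier S"
  shows "psi (s1 \<otimes>\<^bsub>S\<^esub> s2) = psi s1 \<otimes>\<^bsub>T\<^esub> psi s2"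
proof (rule ext)
  fix x :: "'m + 'l \<Rightarrow> int"
  define w where "w = x \<circ> Inl"
  define u where "u = x \<circ> Inr"
  have xj: "x = join w u" unfolding w_def u_def by (rule join_split[symmetric])
  define r1 where "r1 u' = crep (s1 u')" for u'
  define r2 where "r2 u' = crep (s2 u')" for u'
  have r1G: "r1 u' \<in> G u'" for u' unfolding r1_def using GG.grE(1)[OF s1] .
  have r2G: "r2 u' \<in> G u'" for u' unfolding r2_def using GG.grE(1)[OF s2] .
  have r1c: "r1 u' \<in> carrier R" for u' using G_carr[OF r1G] .
  have r2c: "r2 u' \<in> carrier R" for u' using G_carr[OF r2G] .
  define U where "U = {u'. s1 u' \<noteq> Glt u' \<and> s2 (u - u') \<noteq> Glt (u - u')}"
  have Uf: "finite U" using finite_subset[OF _ GG.grE(4)[OF s1]] unfolding U_def by auto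
  define q where "q = finsum R (\<lambda>u'. r1 u' \<otimes>\<^bsub>R\<^esub> r2 (u - u')) U"
  have pG: "r1 u' \<otimes>\<^bsub>R\<^esub> r2 (u - u') \<in> G u" for u'
    using GG.F_mult[OF r1G r2G, of u' "u - u'"] by simp
  have pc: "(\<lambda>u'. r1 u' \<otimes>\<^bsub>R\<^esub> r2 (u - u')) \<in> U \<rightarrow> carrier R" using G_carr[OF pG] by blast
  have qG: "q \<in> G u" unfolding q_def by (intro FF.GR.sg_finsum[OF GG.F_sg Uf] Pi_I pG)
  have qc: "q \<in> carrier R" using G_carr[OF qG] .
  have e: "(s1 \<otimes>\<^bsub>S\<^esub> s2) u = Glt u +>\<^bsub>R\<^esub> q"
    unfolding GG.gr_simps(6) q_def U_def r1_def r2_def by simp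
  have sc: "s1 \<otimes>\<^bsub>S\<^esub> s2 \<in> carrier S" using SS.m_closed[OF s1 s2] .
  define V where "V u' = {v. r1 u' v \<noteq> flt1 v \<and> r2 (u - u') (w - v) \<noteq> flt1 (w - v)}" for u'
  have Vf: "finite (V u')" for u' unfolding V_def by (rule finite_subset[OF _ FF.grE(4)[OF r1c[of u']]]) auto
  define g where "g y = av s1 y \<otimes> av s2 (x - y)" for y
  have gc: "g y \<in> carrier A" for y unfolding g_def using av_carr[OF s1] av_carr[OF s2] by simp
  define P where "P = (\<lambda>(u', v). join v u') ` (SIGMA u':U. V u')"
  have Pf: "finite P" unfolding P_def using Uf Vf by auto
  have trm: "crep (r1 u' v) \<otimes> crep (r2 (u - u') (w - v)) = g (join v u')" for u' v
    unfolding g_def av_def r1_def r2_def xj by simp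
  have "psi (s1 \<otimes>\<^bsub>S\<^esub> s2) x = Hlt x +> crep (q w)"
    unfolding psi_def xj using av_cos[OF sc qG e] .
  also have "\<dots> = Hlt x +> finsum A g P"
  proof -
    have "flt1 w +> crep (q w) = flt1 w +> finsum A (\<lambda>u'. crep ((r1 u' \<otimes>\<^bsub>R\<^esub> r2 (u - u')) w)) U"
      unfolding q_def by (rule FF.comp_finsum[OF Uf pc])
    also have "\<dots> = flt1 w +> finsum A (\<lambda>u'. finsum A (\<lambda>v. g (join v u')) (V u')) U"
    proof (rule FF.cos_sum[OF FF.flt_sg Uf])
      show "(\<lambda>u'. crep ((r1 u' \<otimes>\<^bsub>R\<^esub> r2 (u - u')) w)) \<in> U \<rightarrow> carrier A"
        using FF.grE(3)[OF G_carr[OF pG]] by blast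
      show "(\<lambda>u'. finsum A (\<lambda>v. g (join v u')) (V u')) \<in> U \<rightarrow> carrier A"
        using gc by (auto intro!: FF.finsum_closed)
      fix u' assume "u' \<in> U"
      have sc': "finsum A (\<lambda>v. crep (r1 u' v) \<otimes> crep (r2 (u - u') (w - v))) (V u') \<in> carrier A"
        using FF.grE(3)[OF r1c] FF.grE(3)[OF r2c] by (auto intro!: FF.finsum_closed)
      have "flt1 w +> crep ((r1 u' \<otimes>\<^bsub>R\<^esub> r2 (u - u')) w)
          = flt1 w +> finsum A (\<lambda>v. crep (r1 u' v) \<otimes> crep (r2 (u - u') (w - v))) (V u')"
        unfolding FF.gr_simps(6) V_def using FF.crep_cos[OF sc'[unfolded V_def]] by simp
      also have "finsum A (\<lambda>v. crep (r1 u' v) \<otimes> crep (r2 (u - u') (w - v))) (V u')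
          = finsum A (\<lambda>v. g (join v u')) (V u')"
        using trm by simp
      finally show "flt1 w +> crep ((r1 u' \<otimes>\<^bsub>R\<^esub> r2 (u - u')) w) = flt1 w +> finsum A (\<lambda>v. g (join v u')) (V u')" .
    qed
    also have "finsum A (\<lambda>u'. finsum A (\<lambda>v. g (join v u')) (V u')) U
        = finsum A (\<lambda>(u', v). g (join v u')) (SIGMA u':U. V u')"
      using FF.finsum_Sigma[OF Uf Vf, where g = "\<lambda>(u', v). g (join v u')"] gc by simp
    also have "\<dots> = finsum A (\<lambda>p. g ((\<lambda>(u', v). join v u') p)) (SIGMA u':U. V u')"
      by (intro FF.finsum_cong') (auto simp: gc split: prod.split)
    also have "\<dots> = finsum A g P"
      unfolding P_def
      by (rule FF.finsum_reindex[symmetric]) (use gc in \<open>auto simp: inj_on_def join_inj\<close>)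
    finally have "flt1 w +> crep (q w) = flt1 w +> finsum A g P" .
    moreover have gP: "finsum A g P \<in> carrier A" using gc by (intro FF.finsum_closed) auto
    ultimately show ?thesis unfolding xj by (intro cos_up[OF FF.grE(3)[OF qc] gP])
  qed
  also have "\<dots> = Hlt x +> finsum A g {y. psi s1 y \<noteq> Hlt y \<and> psi s2 (x - y) \<noteq> Hlt (x - y)}"
  proof (rule FF.cos_sum_ext[OF HH.flt_sg Pf])
    show "g \<in> P \<rightarrow> carrier A" using gc by blast
    show "{y. psi s1 y \<noteq> Hlt y \<and> psi s2 (x - y) \<noteq> Hlt (x - y)} \<subseteq> P"
    proof
      fix y assume "y \<in> {y. psi s1 y \<noteq> Hlt y \<and> psi s2 (x - y) \<noteq> Hlt (x - y)}"
      then have y1: "av s1 y \<notin> Hlt y" and y2: "av s2 (x - y) \<notin> Hlt (x - y)"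
        using psi_zero_iff[OF s1] psi_zero_iff[OF s2] by auto
      have a1: "s1 (y \<circ> Inr) \<noteq> Glt (y \<circ> Inr)" "crep (s1 (y \<circ> Inr)) (y \<circ> Inl) \<noteq> flt1 (y \<circ> Inl)"
        using av_Hlt[OF s1] y1 by auto
      have a2: "s2 ((x - y) \<circ> Inr) \<noteq> Glt ((x - y) \<circ> Inr)"
        "crep (s2 ((x - y) \<circ> Inr)) ((x - y) \<circ> Inl) \<noteq> flt1 ((x - y) \<circ> Inl)"
        using av_Hlt[OF s2] y2 by auto
      have "y \<circ> Inr \<in> U" using a1 a2 unfolding U_def u_def by simp
      moreover have "y \<circ> Inl \<in> V (y \<circ> Inr)" using a1 a2 unfolding V_def r1_def r2_def u_def w_def by simp
      ultimately show "y \<in> P" unfolding P_def using join_split[of y]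
        by (auto intro!: image_eqI[of _ _ "(y \<circ> Inr, y \<circ> Inl)"])
    qed
    fix y assume y: "y \<in> P - {y. psi s1 y \<noteq> Hlt y \<and> psi s2 (x - y) \<noteq> Hlt (x - y)}"
    then have "av s1 y \<in> Hlt y \<or> av s2 (x - y) \<in> Hlt (x - y)"
      using psi_zero_iff[OF s1] psi_zero_iff[OF s2] by auto
    then have "g y \<in> Hlt (y + (x - y))"
      using HH.flt_multl[OF _ av_H[OF s2]] HH.flt_multr[OF av_H[OF s1]] unfolding g_def by blast
    then show "g y \<in> Hlt x" by simp
  qed
  also have "\<dots> = Hlt x +> finsum A (\<lambda>y. crep (psi s1 y) \<otimes> crep (psi s2 (x - y)))
                      {y. psi s1 y \<noteq> Hlt y \<and> psi s2 (x - y) \<noteq> Hlt (x - y)}"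
  proof (rule FF.cos_sum[OF HH.flt_sg])
    have "{y. psi s1 y \<noteq> Hlt y \<and> psi s2 (x - y) \<noteq> Hlt (x - y)} \<subseteq> {y. psi s1 y \<noteq> Hlt y}" by blast
    then show "finite {y. psi s1 y \<noteq> Hlt y \<and> psi s2 (x - y) \<noteq> Hlt (x - y)}"
      using finite_subset HH.grE(4)[OF psi_carr[OF s1]] by blast
    show "g \<in> {y. psi s1 y \<noteq> Hlt y \<and> psi s2 (x - y) \<noteq> Hlt (x - y)} \<rightarrow> carrier A" using gc by blast
    show "(\<lambda>y. crep (psi s1 y) \<otimes> crep (psi s2 (x - y))) \<in> {y. psi s1 y \<noteq> Hlt y \<and> psi s2 (x - y) \<noteq> Hlt (x - y)} \<rightarrow> carrier A"
      using crep_psi_carr[OF s1] crep_psi_carr[OF s2] by blast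
    fix y
    have "Hlt (y + (x - y)) +> (av s1 y \<otimes> av s2 (x - y)) = Hlt (y + (x - y)) +> (crep (psi s1 y) \<otimes> crep (psi s2 (x - y)))"
    proof (rule HH.mult_cong[OF av_carr[OF s1] HH.grE(1)[OF psi_carr[OF s1]] _ av_H[OF s2] crep_psi_carr[OF s2]])
      show "Hlt y +> av s1 y = Hlt y +> crep (psi s1 y)" using crep_psi[OF s1] by simp
      show "Hlt (x - y) +> av s2 (x - y) = Hlt (x - y) +> crep (psi s2 (x - y))" using crep_psi[OF s2] by simp
    qed
    then show "Hlt x +> g y = Hlt x +> (crep (psi s1 y) \<otimes> crep (psi s2 (x - y)))" unfolding g_def by simp
  qed
  also have "\<dots> = (psi s1 \<otimes>\<^bsub>T\<^esub> psi s2) x" unfolding HH.gr_simps(6) by simp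
  finally show "psi (s1 \<otimes>\<^bsub>S\<^esub> s2) x = (psi s1 \<otimes>\<^bsub>T\<^esub> psi s2) x" .
qed

end

context main begin

lemma psi_iso: "psi \<in> ring_iso S T"
  by (rule ring_iso_memI[OF psi_carr psi_mult psi_add psi_one psi_bij])

lemma ringS: "ring S" using domS by (simp add: domain_def cring_def)

lemma domT: "domain T"
proof -
  have "domain (T \<lparr> zero := psi \<zero>\<^bsub>S\<^esub> \<rparr>)" by (rule SS.ring_iso_imp_img_domain[OF psi_iso])
  then show ?thesis using psi_zero by simp
qed

lemma final:
  "tot_ordered_group LX \<and> filtration K A LX H \<and> domain T
    \<and> (\<exists>\<phi>. \<phi> \<in> ring_iso T S
         \<and> (\<forall>c\<in>carrier K. \<forall>f\<in>carrier T. \<phi> (c \<odot>\<^bsub>T\<^esub> f) = c \<odot>\<^bsub>S\<^esub> \<phi> f)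
         \<and> (\<forall>x. \<forall>a\<in>H x. \<phi> (hcls A LX H x a) = hcls R lt2 G (x \<circ> Inr) (hcls A lt1 F (x \<circ> Inl) a)))"
proof (intro conjI)
  show "tot_ordered_group LX" by (rule lex_tot[OF tot1 tot2])
  show "filtration K A LX H" by (rule H_filt)
  show "domain T" by (rule domT)
  define \<phi> where "\<phi> = inv_into (carrier S) psi"
  have iso: "\<phi> \<in> ring_iso T S" unfolding \<phi>_def by (rule ring_iso_set_sym[OF ringS psi_iso])
  have left: "\<phi> (psi s) = s" if "s \<in> carrier S" for s
    unfolding \<phi>_def using bij_betw_inv_into_left[OF psi_bij that] .
  have right: "psi (\<phi> f) = f" if "f \<in> carrier T" for f
    unfolding \<phi>_def using bij_betw_inv_into_right[OF psi_bij that] .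
  have into: "\<phi> f \<in> carrier S" if "f \<in> carrier T" for f
    unfolding \<phi>_def using inv_into_into[of f psi "carrier S"] psi_bij that
    unfolding bij_betw_def by blast
  have sm: "\<forall>c\<in>carrier K. \<forall>f\<in>carrier T. \<phi> (c \<odot>\<^bsub>T\<^esub> f) = c \<odot>\<^bsub>S\<^esub> \<phi> f"
  proof (intro ballI)
    fix c f assume c: "c \<in> carrier K" and f: "f \<in> carrier T"
    have "c \<odot>\<^bsub>T\<^esub> f = psi (c \<odot>\<^bsub>S\<^esub> \<phi> f)" using psi_smult[OF c into[OF f]] right[OF f] by simp
    then show "\<phi> (c \<odot>\<^bsub>T\<^esub> f) = c \<odot>\<^bsub>S\<^esub> \<phi> f" using left[OF GG.gr_smult_carr[OF c into[OF f]]] by simp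
  qed
  have hc: "\<forall>x. \<forall>a\<in>H x. \<phi> (hcls A LX H x a) = hcls R lt2 G (x \<circ> Inr) (hcls A lt1 F (x \<circ> Inl) a)"
  proof (intro allI ballI)
    fix x a assume a: "a \<in> H x"
    have sc: "hcls R lt2 G (x \<circ> Inr) (hcls A lt1 F (x \<circ> Inl) a) \<in> carrier S"
      using GG.hcls_carr a H_iff by blast
    show "\<phi> (hcls A LX H x a) = hcls R lt2 G (x \<circ> Inr) (hcls A lt1 F (x \<circ> Inl) a)"
      using psi_hcls[OF a] left[OF sc] by simp
  qed
  show "\<exists>\<phi>. \<phi> \<in> ring_iso T S
         \<and> (\<forall>c\<in>carrier K. \<forall>f\<in>carrier T. \<phi> (c \<odot>\<^bsub>T\<^esub> f) = c \<odot>\<^bsub>S\<^esub> \<phi> f)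
         \<and> (\<forall>x. \<forall>a\<in>H x. \<phi> (hcls A LX H x a) = hcls R lt2 G (x \<circ> Inr) (hcls A lt1 F (x \<circ> Inl) a))"
    using iso sm hc by blast
qed

end

theorem mainTheorem4:
  fixes K :: "'k ring" and A :: "('k, 'b) module"
    and lt1 :: "('m::finite \<Rightarrow> int) \<Rightarrow> ('m \<Rightarrow> int) \<Rightarrow> bool"
    and lt2 :: "('l::finite \<Rightarrow> int) \<Rightarrow> ('l \<Rightarrow> int) \<Rightarrow> bool"
    and F :: "('m \<Rightarrow> int) \<Rightarrow> 'b set"
    and G :: "('l \<Rightarrow> int) \<Rightarrow> (('m \<Rightarrow> int) \<Rightarrow> 'b set) set"
  assumes "field K" and "algebra K A" and "domain A"
    and "tot_ordered_group lt1" and "tot_ordered_group lt2"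
    and "filtration K A lt1 F" and "domain (gr A lt1 F)"
    and "filtration K (gr A lt1 F) lt2 G" and "domain (gr (gr A lt1 F) lt2 G)"
    and "grading_compatible lt1 F G"
  shows "tot_ordered_group (lexcomp lt1 lt2)
    \<and> filtration K A (lexcomp lt1 lt2) (compF A lt1 F G)
    \<and> domain (gr A (lexcomp lt1 lt2) (compF A lt1 F G))
    \<and> (\<exists>\<phi>. \<phi> \<in> ring_iso (gr A (lexcomp lt1 lt2) (compF A lt1 F G)) (gr (gr A lt1 F) lt2 G)
         \<and> (\<forall>c\<in>carrier K. \<forall>f\<in>carrier (gr A (lexcomp lt1 lt2) (compF A lt1 F G)).
              \<phi> (c \<odot>\<^bsub>gr A (lexcomp lt1 lt2) (compF A lt1 F G)\<^esub> f)
                = c \<odot>\<^bsub>gr (gr A lt1 F) lt2 G\<^esub> \<phi> f)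
         \<and> (\<forall>x. \<forall>a\<in>compF A lt1 F G x.
              \<phi> (hcls A (lexcomp lt1 lt2) (compF A lt1 F G) x a)
                = hcls (gr A lt1 F) lt2 G (x \<circ> Inr) (hcls A lt1 F (x \<circ> Inl) a)))"
proof -
  interpret M: main K A lt1 lt2 F G
    using assms by (intro main.intro)
  show ?thesis by (rule M.final)
qed

end
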